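(* Let $M>1$, $\tau>0$, $\kappa\in(0,1)$, $T>0$. Let $p\in C^2(\mathbb{R})$ be monotonically increasing with values in $(p_{min},1]$, let $\varepsilon>0$, $p_\varepsilon=\frac{p+\varepsilon}{1+\varepsilon}$, with $|p_\varepsilon'|\le c_p(1-p_\varepsilon)$, $|p_\varepsilon''|\le c_p(1-p_\varepsilon)$ for some $c_p>0$. Let $g_0\in H^1(\mathbb{R})$, $g_0\ge0$, $\int g_0/p_\varepsilon\,dx=1$, $\int e^{4|x|}g_0^2/p_\varepsilon\,dx<\infty$, $\int e^{4|x|}|\partial_xg_0|^2\,dx<\infty$. Let $\tilde c,\tilde d$ be functions on $[0,T]$, $\tilde d$ differentiable, with $\inf_{[0,T]}\tilde d>0$, $\sup_{[0,T]}\{|\tilde c|+\tilde d+|\tilde d'|\}<\infty$, and let $g$ be the unique strong solution (with $g\ge0$, $\int g/p_\varepsilon\,dx=1$) of $\partial_tg+\tilde c(t)p_\varepsilon\partial_xg-\tilde d(t)p_\varepsilon\partial^2_{xx}g=0$, $g(\cdot,0)=g_0$. Let $\alpha(t)=\int_{\mathbb{R}}g(x,t)\,dx$, $a(t)=\kappa-\alpha(t)$, $b(t)=\alpha(t)(1-\alpha(t))$ and $d(t)=\frac{(M-1)^2}{2}\big(a^2(t)+\frac{b(t)}{M-1}\big)$. Then \[ d(t)\ge\frac{(M-1)\beta(0)}{2}e^{-c_0t}>0,\qquad t>0, \] where $\beta(0)=\int_{\mathbb{R}}(1-p_\varepsilon(x))g_0(x)\,dx$ and $c_0$ is a constant depending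 only on $c_p$ and on $\sup_{[0,T]}|\tilde c|$, $\sup_{[0,T]}\tilde d$ (the constant for which $\beta(t)=\int(1-p_\varepsilon)g\,dx$ satisfies $|\beta'|\le c_0\beta$). *)

theory Defs
  imports "HOL-Analysis.Analysis"
begin

definition test_fun :: "(real \<Rightarrow> real) \<Rightarrow> bool" where
  "test_fun \<phi> \<longleftrightarrow>
     (\<forall>k x. ((deriv ^^ k) \<phi>) differentiable (at x)) \<and>
     (\<exists>R. \<forall>x. R < \<bar>x\<bar> \<longrightarrow> \<phi> x = 0)"

definition loc_int :: "(real \<Rightarrow> real) \<Rightarrow> bool" where
  "loc_int u \<longleftrightarrow> (\<forall>a b. set_integrable lborel {a..b} u)"

definition weak_deriv :: "(real \<Rightarrow> real) \<Rightarrow> (real \<Rightarrow> real) \<Rightarrow> bool" where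
  "weak_deriv u v \<longleftrightarrow> loc_int u \<and> loc_int v \<and>
     (\<forall>\<phi>. test_fun \<phi> \<longrightarrow>
        (\<integral>x. u x * deriv \<phi> x \<partial>lborel) = - (\<integral>x. v x * \<phi> x \<partial>lborel))"

definition L2 :: "(real \<Rightarrow> real) \<Rightarrow> bool" where
  "L2 u \<longleftrightarrow> u \<in> borel_measurable lborel \<and> integrable lborel (\<lambda>x. (u x)\<^sup>2)"

definition H1 :: "(real \<Rightarrow> real) \<Rightarrow> (real \<Rightarrow> real) \<Rightarrow> bool" where
  "H1 u u' \<longleftrightarrow> L2 u \<and> L2 u' \<and> weak_deriv u u'"

definition C2 :: "(real \<Rightarrow> real) \<Rightarrow> bool" where
  "C2 f \<longleftrightarrow> (\<forall>x. f differentiable (at x)) \<and> (\<forall>x. deriv f differentiable (at x))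
            \<and> continuous_on UNIV (deriv (deriv f))"

definition L2_strip :: "real \<Rightarrow> (real \<Rightarrow> real \<Rightarrow> real) \<Rightarrow> bool" where
  "L2_strip T u \<longleftrightarrow> (\<lambda>(x,t). u x t) \<in> borel_measurable lborel \<and>
     set_integrable lborel (UNIV \<times> {0<..<T}) (\<lambda>(x,t). (u x t)\<^sup>2)"

text \<open>Strong solution g (with strong derivatives gx = \<partial>_x g, gxx = \<partial>^2_xx g, gt = \<partial>_t g)
  on R x (0,T) of  g_t + c(t) q(x) g_x - d(t) q(x) g_xx = 0,  g(.,0) = g0,
  in the class W^{2,1}_2 = L^2(0,T;H^2(R)) \<inter> H^1(0,T;L^2(R)).
  The representative of g is the one continuous in time with values in L^2:
  g(.,t) = g0 + \<integral>_0^t gt(.,s) ds  for every t in [0,T].\<close>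
definition strong_solution ::
  "real \<Rightarrow> (real \<Rightarrow> real) \<Rightarrow> (real \<Rightarrow> real) \<Rightarrow> (real \<Rightarrow> real) \<Rightarrow> (real \<Rightarrow> real) \<Rightarrow>
   (real \<Rightarrow> real \<Rightarrow> real) \<Rightarrow> (real \<Rightarrow> real \<Rightarrow> real) \<Rightarrow> (real \<Rightarrow> real \<Rightarrow> real) \<Rightarrow>
   (real \<Rightarrow> real \<Rightarrow> real) \<Rightarrow> bool" where
  "strong_solution T c d q g0 g gx gxx gt \<longleftrightarrow>
     L2_strip T g \<and> L2_strip T gx \<and> L2_strip T gxx \<and> L2_strip T gt \<and>
     (AE t in lborel. t \<in> {0<..<T} \<longrightarrow>
        weak_deriv (\<lambda>x. g x t) (\<lambda>x. gx x t) \<and> weak_deriv (\<lambda>x. gx x t) (\<lambda>x. gxx x t)) \<and>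
     (\<forall>t\<in>{0..T}. AE x in lborel. g x t = g0 x + (LINT s:{0..t}|lborel. gt x s)) \<and>
     (AE z in lborel. z \<in> UNIV \<times> {0<..<T} \<longrightarrow>
        (case z of (x,t) \<Rightarrow> gt x t + c t * q x * gx x t - d t * q x * gxx x t = 0))"

end

theory Submission
  imports Defs "HOL-Computational_Algebra.Polynomial"
begin

definition Ck :: "nat \<Rightarrow> (real \<Rightarrow> real) \<Rightarrow> bool" where
  "Ck k f \<longleftrightarrow> (\<exists>F. F 0 = f \<and> (\<forall>j<k. \<forall>x. (F j has_real_derivative F (Suc j) x) (at x)))"

lemma Ck_0[simp]: "Ck 0 f"
  unfolding Ck_def by (rule exI[of _ "\<lambda>_. f"]) simp

lemma Ck_Suc: "Ck (Suc k) f \<longleftrightarrow> (\<exists>f'. (\<forall>x. (f has_real_derivative f' x) (at x)) \<and> Ck k f')"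
proof
  assume "Ck (Suc k) f"
  then obtain F where F: "F 0 = f" "\<forall>j<Suc k. \<forall>x. (F j has_real_derivative F (Suc j) x) (at x)"
    unfolding Ck_def by blast
  show "\<exists>f'. (\<forall>x. (f has_real_derivative f' x) (at x)) \<and> Ck k f'"
    apply (rule exI[of _ "F 1"])
    using F unfolding Ck_def
    by (auto intro!: exI[of _ "\<lambda>j. F (Suc j)"])
next
  assume "\<exists>f'. (\<forall>x. (f has_real_derivative f' x) (at x)) \<and> Ck k f'"
  then obtain f' F where f': "\<forall>x. (f has_real_derivative f' x) (at x)" and F: "F 0 = f'"
    "\<forall>j<k. \<forall>x. (F j has_real_derivative F (Suc j) x) (at x)"
    unfolding Ck_def by blast
  show "Ck (Suc k) f"
    unfolding Ck_def
  proof (intro exI[of _ "\<lambda>j. if j = 0 then f else F (j - 1)"] conjI allI impI)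
    fix j x assume "j < Suc k"
    then show "((if j = 0 then f else F (j - 1)) has_real_derivative
      (if Suc j = 0 then f else F (Suc j - 1)) x) (at x)"
      using f' F by (cases j) auto
  qed simp
qed

lemma Ck_mono: "Ck k f \<Longrightarrow> j \<le> k \<Longrightarrow> Ck j f"
  unfolding Ck_def by force

lemma Ck_add: "Ck k f \<Longrightarrow> Ck k g \<Longrightarrow> Ck k (\<lambda>x. f x + g x)"
  unfolding Ck_def
  apply (elim exE conjE)
  subgoal for F G
    by (rule exI[of _ "\<lambda>j x. F j x + G j x"]) (auto intro!: derivative_eq_intros)
  done

lemma Ck_cmult: "Ck k f \<Longrightarrow> Ck k (\<lambda>x. c * f x)"
  unfolding Ck_def
  apply (elim exE conjE)
  subgoal for F
    by (rule exI[of _ "\<lambda>j x. c * F j x"]) (auto intro!: derivative_eq_intros)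
  done

lemma Ck_const: "Ck k (\<lambda>x. c)"
  unfolding Ck_def
  by (rule exI[of _ "\<lambda>j x. if j = 0 then c else 0"]) (auto intro!: derivative_eq_intros)

lemma Ck_id: "Ck k (\<lambda>x. x)"
  unfolding Ck_def
  by (rule exI[of _ "\<lambda>j x. if j = 0 then x else if j = 1 then 1 else 0"])
     (auto intro!: derivative_eq_intros)

lemma Ck_affine: "Ck k f \<Longrightarrow> Ck k (\<lambda>x. f (a * x + b))"
  unfolding Ck_def
  apply (elim exE conjE)
  subgoal for F
    apply (rule exI[of _ "\<lambda>j x. a ^ j * F j (a * x + b)"])
    apply (intro conjI allI impI)
     apply simp
    subgoal for j x
    proof -
      assume "\<forall>j<k. \<forall>x. (F j has_real_derivative F (Suc j) x) (at x)" "j < k"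
      then have d: "(F j has_real_derivative F (Suc j) (a*x+b)) (at (a*x+b))" by blast
      have "((\<lambda>x. F j (a*x+b)) has_real_derivative F (Suc j) (a*x+b) * a) (at x)"
        by (rule DERIV_chain2[where g="\<lambda>x. a*x+b", OF d]) (auto intro!: derivative_eq_intros)
      then have "((\<lambda>x. a^j * F j (a*x+b)) has_real_derivative a^j * (F (Suc j) (a*x+b) * a)) (at x)"
        by (rule DERIV_cmult)
      then show ?thesis by (simp add: mult_ac)
    qed
    done
  done

lemma Ck_mult: "Ck k f \<Longrightarrow> Ck k g \<Longrightarrow> Ck k (\<lambda>x. f x * g x)"
proof (induction k arbitrary: f g)
  case 0
  then show ?case by simp
next
  case (Suc k)
  obtain f' where f': "\<forall>x. (f has_real_derivative f' x) (at x)" "Ck k f'"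
    using Suc.prems(1) Ck_Suc by blast
  obtain g' where g': "\<forall>x. (g has_real_derivative g' x) (at x)" "Ck k g'"
    using Suc.prems(2) Ck_Suc by blast
  have "Ck k f" "Ck k g" using Suc.prems Ck_mono by auto
  then have "Ck k (\<lambda>x. f' x * g x + f x * g' x)"
    using Suc.IH f' g' by (intro Ck_add) auto
  moreover have "\<forall>x. ((\<lambda>x. f x * g x) has_real_derivative f' x * g x + f x * g' x) (at x)"
    using f' g' by (auto intro!: derivative_eq_intros)
  ultimately show ?case unfolding Ck_Suc
    by (intro exI[of _ "\<lambda>x. f' x * g x + f x * g' x"]) auto
qed

lemma Ck_power: "Ck k f \<Longrightarrow> Ck k (\<lambda>x. f x ^ n)"
  by (induction n) (auto intro: Ck_mult Ck_const)

lemma Ck_sum: "(\<And>i. i \<in> A \<Longrightarrow> Ck k (f i)) \<Longrightarrow> Ck k (\<lambda>x. \<Sum>i\<in>A. f i x)"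
  by (induction A rule: infinite_finite_induct) (auto intro: Ck_add Ck_const)

lemma Ck_poly: "Ck k (\<lambda>x. \<Sum>i\<le>n. a i * x ^ i)"
  by (intro Ck_sum Ck_cmult Ck_power Ck_id)

lemma Ck_antideriv: "(\<forall>x. (F has_real_derivative f x) (at x)) \<Longrightarrow> Ck k f \<Longrightarrow> Ck (Suc k) F"
  unfolding Ck_Suc by blast

lemma Ck_deriv_funpow:
  assumes "Ck k f" "j < k"
  shows "(deriv ^^ j) f differentiable (at x)"
proof -
  obtain F where F: "F 0 = f" "\<forall>j<k. \<forall>x. (F j has_real_derivative F (Suc j) x) (at x)"
    using assms unfolding Ck_def by blast
  have "j < k \<Longrightarrow> (deriv ^^ j) f = F j" for j
  proof (induction j)
    case 0 then show ?case using F by simp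
  next
    case (Suc j)
    then have "(deriv ^^ Suc j) f = deriv (F j)" by simp
    also have "\<dots> = F (Suc j)"
      using F Suc by (auto intro!: ext DERIV_imp_deriv)
    finally show ?case .
  qed
  then show ?thesis using F assms(2) real_differentiable_def by metis
qed

definition smooth :: "(real \<Rightarrow> real) \<Rightarrow> bool" where
  "smooth f \<longleftrightarrow> (\<forall>k. Ck k f)"

lemma smooth_test_fun:
  assumes "smooth f" "\<And>x. R < \<bar>x\<bar> \<Longrightarrow> f x = 0"
  shows "test_fun f"
  unfolding test_fun_def using assms Ck_deriv_funpow[of "Suc k" f k for k]
  unfolding smooth_def by blast

definition fb :: "real poly \<Rightarrow> real \<Rightarrow> real" where
  "fb P x = (if x > 0 then poly P (1/x) * exp (-(1/x)) else 0)"

lemma poly_exp_lim: "((\<lambda>y. poly P y * y / exp y) \<longlongrightarrow> 0) at_top" for P :: "real poly"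
proof -
  have eq: "poly P y * y / exp y = (\<Sum>i\<le>degree P. coeff P i * (y ^ Suc i / exp y))" for y :: real
  proof -
    have "poly P y * y / exp y = (\<Sum>i\<le>degree P. coeff P i * y^i) * y / exp y" by (simp add: poly_altdef)
    also have "\<dots> = (\<Sum>i\<le>degree P. coeff P i * y^i * y / exp y)" by (simp add: sum_distrib_right sum_divide_distrib)
    also have "\<dots> = (\<Sum>i\<le>degree P. coeff P i * (y ^ Suc i / exp y))" by (intro sum.cong) (auto simp: mult_ac)
    finally show ?thesis .
  qed
  show ?thesis unfolding eq
    by (intro tendsto_null_sum tendsto_mult_right_zero tendsto_power_div_exp_0)
qed

lemma fb_deriv: "(fb P has_real_derivative fb ([:0,0,1:] * (P - pderiv P)) x) (at x)"
proof (cases "x = 0")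
  case True
  have lim_r: "((\<lambda>h. (fb P (0 + h) - fb P 0) / h) \<longlongrightarrow> 0) (at_right 0)"
  proof -
    have "((\<lambda>h. poly P (inverse h) * inverse h / exp (inverse h)) \<longlongrightarrow> 0) (at_right (0::real))"
      by (rule filterlim_compose[OF poly_exp_lim filterlim_inverse_at_top_right])
    then show ?thesis
      apply (rule Lim_transform_eventually)
      apply (rule eventually_at_rightI[of 0 1])
      by (auto simp: fb_def exp_minus field_simps)
  qed
  have lim_l: "((\<lambda>h. (fb P (0 + h) - fb P 0) / h) \<longlongrightarrow> 0) (at_left 0)"
    apply (rule Lim_transform_eventually[of "\<lambda>_. 0"])
     apply simp
    apply (rule eventually_at_leftI[of "-1"])
    by (auto simp: fb_def)
  have "((\<lambda>h. (fb P (0 + h) - fb P 0) / h) \<longlongrightarrow> 0) (at 0)"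
    using lim_l lim_r by (rule filterlim_split_at)
  then show ?thesis using True by (simp add: DERIV_def fb_def)
next
  case False
  show ?thesis
  proof (cases "x > 0")
    case True
    have d: "((\<lambda>x. poly P (1/x) * exp (-(1/x))) has_real_derivative
       poly (pderiv P) (1/x) * (- 1 / x^2) * exp (-(1/x)) + poly P (1/x) * (exp (-(1/x)) * (1 / x^2))) (at x)"
    proof -
      have i: "((\<lambda>x. 1/x) has_real_derivative (- 1 / x^2)) (at x)"
        using True DERIV_inverse[of x] by (simp add: divide_inverse power2_eq_square)
      have i2: "((\<lambda>x. -(1/x)) has_real_derivative (1 / x^2)) (at x)"
        using DERIV_minus[OF i] by simp
      have a: "((\<lambda>x. poly P (1/x)) has_real_derivative poly (pderiv P) (1/x) * (- 1 / x^2)) (at x)"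
        by (rule DERIV_chain2[where f="poly P", OF poly_DERIV i])
      have b: "((\<lambda>x. exp (-(1/x))) has_real_derivative exp (-(1/x)) * (1 / x^2)) (at x)"
        by (rule DERIV_chain2[where f="exp", OF DERIV_exp i2])
      show ?thesis using DERIV_mult[OF a b] by (simp add: mult_ac)
    qed
    have eq: "poly (pderiv P) (1/x) * (- 1 / x^2) * exp (-(1/x)) + poly P (1/x) * (exp (-(1/x)) * (1 / x^2))
       = fb ([:0,0,1:] * (P - pderiv P)) x"
      using True by (simp add: fb_def field_simps power2_eq_square)
    show ?thesis
      apply (rule has_field_derivative_transform_within_open[where S="{0<..}", OF d[unfolded eq]])
      using True by (auto simp: fb_def)
  next
    case False
    then have "x < 0" using \<open>x \<noteq> 0\<close> by simp
    have eq: "fb ([:0,0,1:] * (P - pderiv P)) x = 0" using \<open>x < 0\<close> by (simp add: fb_def)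
    show ?thesis unfolding eq
      apply (rule has_field_derivative_transform_within_open[where S="{..<0}" and f="\<lambda>_. 0"])
      using \<open>x < 0\<close> by (auto simp: fb_def)
  qed
qed

lemma Ck_fb: "Ck k (fb P)"
proof (induction k arbitrary: P)
  case 0 then show ?case by simp
next
  case (Suc k)
  then show ?case unfolding Ck_Suc using fb_deriv by blast
qed

definition bump :: "real \<Rightarrow> real" where
  "bump x = fb 1 (1 + x) * fb 1 (1 - x)"

lemma smooth_bump: "smooth bump"
proof -
  have "Ck k (\<lambda>x. fb 1 (1 * x + 1) * fb 1 ((-1) * x + 1))" for k
    by (intro Ck_mult Ck_affine Ck_fb)
  then show ?thesis unfolding smooth_def bump_def by (simp add: add.commute)
qed

lemma bump_nonneg: "bump x \<ge> 0"
  by (simp add: bump_def fb_def)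

lemma bump_zero: "1 \<le> \<bar>x\<bar> \<Longrightarrow> bump x = 0"
  by (auto simp: bump_def fb_def)

lemma bump_0: "bump 0 > 0"
  by (simp add: bump_def fb_def)

lemma smooth_deriv:
  assumes "smooth f"
  shows "(f has_real_derivative deriv f x) (at x)" "smooth (deriv f)"
proof -
  obtain f' where f': "\<forall>x. (f has_real_derivative f' x) (at x)"
    using assms Ck_Suc[of 0 f] unfolding smooth_def by auto
  have eq: "deriv f = f'" using f' by (auto intro!: ext DERIV_imp_deriv)
  show "(f has_real_derivative deriv f x) (at x)" using f' eq by simp
  show "smooth (deriv f)"
    unfolding smooth_def
  proof
    fix k
    obtain g where g: "\<forall>x. (f has_real_derivative g x) (at x)" "Ck k g"
      using assms Ck_Suc[of k f] unfolding smooth_def by auto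
    have "g = f'" using g f' by (auto intro!: ext DERIV_unique)
    then show "Ck k (deriv f)" using g eq by simp
  qed
qed

lemma smooth_cont: "smooth f \<Longrightarrow> continuous_on UNIV f"
  using smooth_deriv(1) by (meson DERIV_isCont continuous_at_imp_continuous_on)

lemma loc_int_bound:
  fixes u G :: "real \<Rightarrow> real"
  assumes u: "loc_int u" and G: "continuous_on UNIV G" and supp: "\<And>x. L < \<bar>x\<bar> \<Longrightarrow> G x = 0"
    and B: "\<And>x. x \<in> {-L..L} \<Longrightarrow> \<bar>G x\<bar> \<le> B"
  shows "integrable lborel (\<lambda>x. u x * G x)"
    "\<bar>\<integral>x. u x * G x \<partial>lborel\<bar> \<le> B * (\<integral>x. \<bar>indicator {-L..L} x * u x\<bar> \<partial>lborel)"
proof -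
  define U where "U x = indicator {-L..L} x * u x" for x
  have U: "integrable lborel U"
    using u unfolding loc_int_def U_def set_integrable_def by simp
  have eq: "u x * G x = U x * G x" for x
  proof (cases "x \<in> {-L..L}")
    case True then show ?thesis by (simp add: U_def)
  next
    case False then have "L < \<bar>x\<bar>" by auto
    then show ?thesis using supp[of x] by simp
  qed
  have bd: "\<bar>U x * G x\<bar> \<le> B * \<bar>U x\<bar>" for x
  proof (cases "x \<in> {-L..L}")
    case True then show ?thesis using B[of x] by (simp add: abs_mult mult_right_mono mult.commute[of "\<bar>U x\<bar>"])
  next
    case False then show ?thesis using B[of x] by (simp add: U_def)
  qed
  have Gm: "G \<in> borel_measurable lborel"
    using G by (simp add: borel_measurable_continuous_onI)
  have int: "integrable lborel (\<lambda>x. U x * G x)"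
  proof (rule Bochner_Integration.integrable_bound[where f="\<lambda>x. B * \<bar>U x\<bar>"])
    show "integrable lborel (\<lambda>x. B * \<bar>U x\<bar>)" using U by auto
    show "(\<lambda>x. U x * G x) \<in> borel_measurable lborel"
      using U Gm by (intro borel_measurable_times) auto
    show "AE x in lborel. norm (U x * G x) \<le> norm (B * \<bar>U x\<bar>)"
      using bd by (auto intro!: AE_I2 order.trans[OF _ abs_ge_self])
  qed
  then show "integrable lborel (\<lambda>x. u x * G x)" unfolding eq .
  have "\<bar>\<integral>x. u x * G x \<partial>lborel\<bar> = \<bar>\<integral>x. U x * G x \<partial>lborel\<bar>" unfolding eq ..
  also have "\<dots> \<le> (\<integral>x. \<bar>U x * G x\<bar> \<partial>lborel)"
    by (rule integral_abs_bound)
  also have "\<dots> \<le> (\<integral>x. B * \<bar>U x\<bar> \<partial>lborel)"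
    apply (rule integral_mono) using int U bd by auto
  also have "\<dots> = B * (\<integral>x. \<bar>U x\<bar> \<partial>lborel)" by simp
  finally show "\<bar>\<integral>x. u x * G x \<partial>lborel\<bar> \<le> B * (\<integral>x. \<bar>indicator {-L..L} x * u x\<bar> \<partial>lborel)"
    unfolding U_def .
qed

lemma cont_bounded_on:
  fixes G :: "real \<Rightarrow> real"
  assumes "continuous_on UNIV G"
  shows "\<exists>B. \<forall>x\<in>{-L..L}. \<bar>G x\<bar> \<le> B"
proof -
  have "compact (G ` {-L..L})"
    by (rule compact_continuous_image) (auto intro: continuous_on_subset[OF assms])
  then obtain B where "\<forall>y\<in>G ` {-L..L}. norm y \<le> B" using compact_imp_bounded bounded_iff by metis
  then show ?thesis by auto
qed

lemma poly_approx:
  fixes h h' :: "real \<Rightarrow> real"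
  assumes h: "\<And>x. (h has_real_derivative h' x) (at x)" and h': "continuous_on UNIV h'"
    and e: "e > 0" and L: "L > 0"
  shows "\<exists>Q P. smooth Q \<and> (\<forall>x. (Q has_real_derivative P x) (at x)) \<and> continuous_on UNIV P \<and>
     (\<forall>x\<in>{-L..L}. \<bar>h' x - P x\<bar> \<le> e \<and> \<bar>h x - Q x\<bar> \<le> 2 * L * e)"
proof -
  obtain g where g: "polynomial_function g" "\<forall>x\<in>{-L..L}. norm (h' x - g x) < e"
    using Stone_Weierstrass_polynomial_function[of "{-L..L}" h' e] h' e
    by (auto intro: continuous_on_subset)
  then obtain a n where gdef: "g = (\<lambda>x. \<Sum>i\<le>n. a i * x ^ i)"
    using real_polynomial_function_iff_sum real_polynomial_function_eq by metis
  define Q where "Q x = h (-L) + (\<Sum>i\<le>n. a i * (x ^ Suc i - (-L) ^ Suc i) / real (Suc i))" for x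
  have Qd: "(Q has_real_derivative g x) (at x)" for x
  proof -
    have "((\<lambda>x. \<Sum>i\<le>n. a i * (x ^ Suc i - (-L) ^ Suc i) / real (Suc i)) has_real_derivative
       (\<Sum>i\<le>n. a i * x ^ i)) (at x)"
      apply (rule DERIV_sum)
      apply (auto intro!: derivative_eq_intros)
      subgoal for i by (cases i) (auto simp: field_simps)
      done
    from DERIV_add[OF DERIV_const[of "h (-L)" "at x"] this]
    show ?thesis unfolding Q_def gdef by simp
  qed
  have gC: "Ck k g" for k unfolding gdef by (rule Ck_poly)
  have sQ: "smooth Q" unfolding smooth_def
  proof
    fix k
    show "Ck k Q"
    proof (cases k)
      case 0 then show ?thesis by simp
    next
      case (Suc j) then show ?thesis using Ck_antideriv[of Q g j] Qd gC by blast
    qed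
  qed
  have gc: "continuous_on UNIV g" unfolding gdef by (intro continuous_intros)
  have "\<bar>h x - Q x\<bar> \<le> 2 * L * e" if x: "x \<in> {-L..L}" for x
  proof -
    have "norm ((h x - Q x) - (h (-L) - Q (-L))) \<le> e * norm (x - (-L))"
    proof (rule field_differentiable_bound[of "{-L..L}" _ "\<lambda>z. h' z - g z"])
      show "convex {-L..L}" by simp
      show "\<And>z. z \<in> {-L..L} \<Longrightarrow> ((\<lambda>x. h x - Q x) has_field_derivative h' z - g z) (at z within {-L..L})"
        using DERIV_diff[OF h Qd] by (rule has_field_derivative_at_within)
      show "\<And>z. z \<in> {- L..L} \<Longrightarrow> norm (h' z - g z) \<le> e" using g by (simp add: less_imp_le)
    qed (use x L in \<open>simp_all\<close>)
    moreover have "Q (-L) = h (-L)" by (simp add: Q_def)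
    ultimately have "\<bar>h x - Q x\<bar> \<le> e * \<bar>x + L\<bar>" by simp
    also have "\<dots> \<le> e * (2 * L)" using x e by (intro mult_left_mono) auto
    finally show ?thesis by (simp add: mult_ac)
  qed
  note hq = this
  have "\<forall>x\<in>{-L..L}. \<bar>h' x - g x\<bar> \<le> e \<and> \<bar>h x - Q x\<bar> \<le> 2 * L * e"
    using hq g(2) by (simp add: less_imp_le)
  then show ?thesis using sQ Qd gc by blast
qed

lemma deriv_supp:
  assumes "smooth f" "\<And>x. L < \<bar>x\<bar> \<Longrightarrow> f x = 0" "L < \<bar>x\<bar>"
  shows "deriv f x = 0"
proof -
  have "(f has_real_derivative 0) (at x)"
    apply (rule has_field_derivative_transform_within_open[where f="\<lambda>_. 0" and S="{y. L < \<bar>y\<bar>}"])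
    using assms by (auto intro!: open_Collect_less continuous_intros)
  then show ?thesis using smooth_deriv(1)[OF assms(1)] DERIV_unique by blast
qed

lemma eps_zero:
  fixes D K :: real
  assumes "\<And>e. e > 0 \<Longrightarrow> \<bar>D\<bar> \<le> e * K"
  shows "D = 0"
proof (rule ccontr)
  assume "D \<noteq> 0"
  then have "\<bar>D\<bar> > 0" by simp
  have "K \<ge> 0" using assms[of 1] by simp
  define e where "e = \<bar>D\<bar> / (K + 1)"
  have e: "e > 0" using \<open>\<bar>D\<bar> > 0\<close> \<open>K \<ge> 0\<close> by (simp add: e_def)
  have "\<bar>D\<bar> \<le> \<bar>D\<bar> * K / (K + 1)" using assms[OF e] by (simp add: e_def)
  also have "\<dots> < \<bar>D\<bar>" using \<open>\<bar>D\<bar> > 0\<close> \<open>K \<ge> 0\<close> by (simp add: field_simps)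
  finally show False by simp
qed

lemma weak_ext:
  fixes u v \<eta> h h' :: "real \<Rightarrow> real"
  assumes wd: "weak_deriv u v" and eta: "smooth \<eta>" and supp: "\<And>x. L < \<bar>x\<bar> \<Longrightarrow> \<eta> x = 0"
    and L: "L > 0"
    and h: "\<And>x. (h has_real_derivative h' x) (at x)" and h': "continuous_on UNIV h'"
  shows "integrable lborel (\<lambda>x. u x * (deriv \<eta> x * h x + \<eta> x * h' x))"
    "integrable lborel (\<lambda>x. v x * (\<eta> x * h x))"
    "(\<integral>x. u x * (deriv \<eta> x * h x + \<eta> x * h' x) \<partial>lborel) = - (\<integral>x. v x * (\<eta> x * h x) \<partial>lborel)"
proof -
  have lu: "loc_int u" and lv: "loc_int v" using wd unfolding weak_deriv_def by auto
  define S where "S = {-L..L}"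
  have suppd: "deriv \<eta> x = 0" if "L < \<bar>x\<bar>" for x using deriv_supp[OF eta supp that] by simp
  have ce: "continuous_on UNIV \<eta>" using smooth_cont[OF eta] .
  have ced: "continuous_on UNIV (deriv \<eta>)" using smooth_cont[OF smooth_deriv(2)[OF eta]] .
  have ch: "continuous_on UNIV h" using h by (meson DERIV_isCont continuous_at_imp_continuous_on)
  obtain Be where Be: "\<forall>x\<in>S. \<bar>\<eta> x\<bar> \<le> Be" using cont_bounded_on[OF ce] unfolding S_def by blast
  obtain Bd where Bd: "\<forall>x\<in>S. \<bar>deriv \<eta> x\<bar> \<le> Bd" using cont_bounded_on[OF ced] unfolding S_def by blast
  have Be0: "Be \<ge> 0" using Be[rule_format, of 0] L by (auto simp: S_def)
  have Bd0: "Bd \<ge> 0" using Bd[rule_format, of 0] L by (auto simp: S_def)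
  define Iu where "Iu = (\<integral>x. \<bar>indicator {-L..L} x * u x\<bar> \<partial>lborel)"
  define Iv where "Iv = (\<integral>x. \<bar>indicator {-L..L} x * v x\<bar> \<partial>lborel)"
  have gen: "integrable lborel (\<lambda>x. w x * G x)"
    if w: "loc_int w" and G: "continuous_on UNIV G" and Gs: "\<And>x. L < \<bar>x\<bar> \<Longrightarrow> G x = 0" for w G
  proof -
    obtain B where "\<forall>x\<in>{-L..L}. \<bar>G x\<bar> \<le> B" using cont_bounded_on[OF G] by blast
    then show ?thesis using loc_int_bound(1)[OF w G Gs] by blast
  qed
  show i1: "integrable lborel (\<lambda>x. u x * (deriv \<eta> x * h x + \<eta> x * h' x))"
    by (rule gen[OF lu]) (auto intro!: continuous_intros ce ced ch h' simp: supp suppd)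
  show i2: "integrable lborel (\<lambda>x. v x * (\<eta> x * h x))"
    by (rule gen[OF lv]) (auto intro!: continuous_intros ce ced ch h' simp: supp suppd)
  define D where "D = (\<integral>x. u x * (deriv \<eta> x * h x + \<eta> x * h' x) \<partial>lborel) + (\<integral>x. v x * (\<eta> x * h x) \<partial>lborel)"
  have "D = 0"
  proof (rule eps_zero[where K="(Bd * 2 * L + Be) * Iu + Be * 2 * L * Iv"])
    fix e :: real assume e: "e > 0"
    obtain Q P where QP: "smooth Q" "\<And>x. (Q has_real_derivative P x) (at x)" "continuous_on UNIV P"
      "\<forall>x\<in>{-L..L}. \<bar>h' x - P x\<bar> \<le> e \<and> \<bar>h x - Q x\<bar> \<le> 2 * L * e"
      using poly_approx[OF h h' e L] by blast
    have cQ: "continuous_on UNIV Q" using smooth_cont[OF QP(1)] .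
    define \<phi> where "\<phi> x = \<eta> x * Q x" for x
    have sphi: "smooth \<phi>" using eta QP(1) unfolding smooth_def \<phi>_def by (auto intro: Ck_mult)
    have tphi: "test_fun \<phi>" by (rule smooth_test_fun[OF sphi, of L]) (simp add: \<phi>_def supp)
    have dphi: "deriv \<phi> = (\<lambda>x. deriv \<eta> x * Q x + \<eta> x * P x)"
    proof
      fix x
      show "deriv \<phi> x = deriv \<eta> x * Q x + \<eta> x * P x"
        unfolding \<phi>_def
        by (rule DERIV_imp_deriv) (use DERIV_mult[OF smooth_deriv(1)[OF eta] QP(2)] in \<open>simp add: mult_ac\<close>)
    qed
    have wk: "(\<integral>x. u x * (deriv \<eta> x * Q x + \<eta> x * P x) \<partial>lborel) = - (\<integral>x. v x * (\<eta> x * Q x) \<partial>lborel)"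
    proof -
      have "(\<integral>x. u x * deriv \<phi> x \<partial>lborel) = - (\<integral>x. v x * \<phi> x \<partial>lborel)"
        using wd tphi unfolding weak_deriv_def by blast
      then show ?thesis unfolding dphi \<phi>_def .
    qed
    have i3: "integrable lborel (\<lambda>x. u x * (deriv \<eta> x * Q x + \<eta> x * P x))"
      by (rule gen[OF lu]) (auto intro!: continuous_intros ce ced cQ QP(3) simp: supp suppd)
    have i4: "integrable lborel (\<lambda>x. v x * (\<eta> x * Q x))"
      by (rule gen[OF lv]) (auto intro!: continuous_intros ce ced cQ simp: supp suppd)
    define G1 where "G1 x = deriv \<eta> x * (h x - Q x) + \<eta> x * (h' x - P x)" for x
    define G2 where "G2 x = \<eta> x * (h x - Q x)" for x
    have D_eq: "D = (\<integral>x. u x * G1 x \<partial>lborel) + (\<integral>x. v x * G2 x \<partial>lborel)"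
    proof -
      have "(\<integral>x. u x * G1 x \<partial>lborel) = (\<integral>x. u x * (deriv \<eta> x * h x + \<eta> x * h' x) - u x * (deriv \<eta> x * Q x + \<eta> x * P x) \<partial>lborel)"
        by (rule Bochner_Integration.integral_cong) (auto simp: G1_def algebra_simps)
      also have "\<dots> = (\<integral>x. u x * (deriv \<eta> x * h x + \<eta> x * h' x) \<partial>lborel) - (\<integral>x. u x * (deriv \<eta> x * Q x + \<eta> x * P x) \<partial>lborel)"
        using i1 i3 by (rule Bochner_Integration.integral_diff)
      finally have a: "(\<integral>x. u x * G1 x \<partial>lborel) = \<dots>" .
      have "(\<integral>x. v x * G2 x \<partial>lborel) = (\<integral>x. v x * (\<eta> x * h x) - v x * (\<eta> x * Q x) \<partial>lborel)"
        by (rule Bochner_Integration.integral_cong) (auto simp: G2_def algebra_simps)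
      also have "\<dots> = (\<integral>x. v x * (\<eta> x * h x) \<partial>lborel) - (\<integral>x. v x * (\<eta> x * Q x) \<partial>lborel)"
        using i2 i4 by (rule Bochner_Integration.integral_diff)
      finally have b: "(\<integral>x. v x * G2 x \<partial>lborel) = \<dots>" .
      show ?thesis unfolding D_def a b wk by simp
    qed
    have b1: "\<bar>\<integral>x. u x * G1 x \<partial>lborel\<bar> \<le> (Bd * (2 * L * e) + Be * e) * Iu"
      unfolding Iu_def
    proof (rule loc_int_bound(2)[OF lu])
      show "continuous_on UNIV G1" unfolding G1_def
        by (auto intro!: continuous_intros ce ced cQ QP(3) ch h')
      show "G1 x = 0" if "L < \<bar>x\<bar>" for x using that by (simp add: G1_def supp suppd)
      show "\<bar>G1 x\<bar> \<le> Bd * (2 * L * e) + Be * e" if x: "x \<in> {-L..L}" for x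
      proof -
        have "\<bar>G1 x\<bar> \<le> \<bar>deriv \<eta> x\<bar> * \<bar>h x - Q x\<bar> + \<bar>\<eta> x\<bar> * \<bar>h' x - P x\<bar>"
          unfolding G1_def by (metis abs_mult abs_triangle_ineq)
        also have "\<dots> \<le> Bd * (2 * L * e) + Be * e"
          using x Bd Be QP(4) Bd0 Be0 unfolding S_def
          by (intro add_mono mult_mono) auto
        finally show ?thesis .
      qed
    qed
    have b2: "\<bar>\<integral>x. v x * G2 x \<partial>lborel\<bar> \<le> (Be * (2 * L * e)) * Iv"
      unfolding Iv_def
    proof (rule loc_int_bound(2)[OF lv])
      show "continuous_on UNIV G2" unfolding G2_def
        by (auto intro!: continuous_intros ce ced cQ QP(3) ch h')
      show "G2 x = 0" if "L < \<bar>x\<bar>" for x using that by (simp add: G2_def supp suppd)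
      show "\<bar>G2 x\<bar> \<le> Be * (2 * L * e)" if x: "x \<in> {-L..L}" for x
      proof -
        have "\<bar>G2 x\<bar> = \<bar>\<eta> x\<bar> * \<bar>h x - Q x\<bar>"
          unfolding G2_def by (simp add: abs_mult)
        also have "\<dots> \<le> Be * (2 * L * e)"
          using x Be QP(4) Be0 unfolding S_def
          by (intro mult_mono) auto
        finally show ?thesis .
      qed
    qed
    have "\<bar>D\<bar> \<le> (Bd * (2 * L * e) + Be * e) * Iu + (Be * (2 * L * e)) * Iv"
      unfolding D_eq using b1 b2 by linarith
    also have "\<dots> = e * ((Bd * 2 * L + Be) * Iu + Be * 2 * L * Iv)" by (simp add: algebra_simps)
    finally show "\<bar>D\<bar> \<le> e * ((Bd * 2 * L + Be) * Iu + Be * 2 * L * Iv)" .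
  qed
  then show "(\<integral>x. u x * (deriv \<eta> x * h x + \<eta> x * h' x) \<partial>lborel) = - (\<integral>x. v x * (\<eta> x * h x) \<partial>lborel)"
    unfolding D_def by linarith
qed

lemma gronwall_lower:
  fixes w :: "real \<Rightarrow> real"
  assumes c: "c > 0" and contw: "continuous_on {0..T} w"
    and ineq: "\<And>t1 t2. 0 \<le> t1 \<Longrightarrow> t1 \<le> t2 \<Longrightarrow> t2 \<le> T \<Longrightarrow> w t2 - w t1 \<ge> - c * integral {t1..t2} w"
    and t: "t \<in> {0..T}"
  shows "w t \<ge> w 0 * exp (- c * t)"
proof (cases "t = 0")
  case True then show ?thesis by simp
next
  case False
  then have t0: "t > 0" and tT: "t \<le> T" using t by auto
  have cw: "continuous_on {0..t} w" using contw tT by (auto intro: continuous_on_subset)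
  define z where "z \<tau> = integral {0..\<tau>} w" for \<tau>
  have wint: "w integrable_on {0..t}" using cw by (rule integrable_continuous_interval)
  have zd: "(z has_real_derivative w \<tau>) (at \<tau> within {0..t})" if "\<tau> \<in> {0..t}" for \<tau>
    unfolding z_def by (rule integral_has_real_derivative[OF cw that])
  have zc: "continuous_on {0..t} z"
    by (rule DERIV_continuous_on[OF zd])
  have comb: "integral {\<tau>..t} w = z t - z \<tau>" if "\<tau> \<in> {0..t}" for \<tau>
    using Henstock_Kurzweil_Integration.integral_combine[where a=0 and c=\<tau> and b=t and f=w] that wint unfolding z_def by auto
  define E where "E = exp (c * t)"
  have E1: "E > 1" using c t0 by (simp add: E_def)
  have h1: "((\<lambda>\<tau>. c * exp (c * \<tau>)) has_integral (E - 1)) {0..t}"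
  proof -
    have "((\<lambda>\<tau>. c * exp (c * \<tau>)) has_integral (exp (c * t) - exp (c * 0))) {0..t}"
      apply (rule fundamental_theorem_of_calculus)
      using t0 apply simp
      apply (rule has_vector_derivative_at_within)
      apply (subst has_real_derivative_iff_has_vector_derivative[symmetric])
      by (auto intro!: derivative_eq_intros)
    then show ?thesis by (simp add: E_def)
  qed
  have h2: "((\<lambda>\<tau>. exp (c * \<tau>) * (w \<tau> + c * z \<tau>)) has_integral (E * z t)) {0..t}"
  proof -
    have "((\<lambda>\<tau>. exp (c * \<tau>) * (w \<tau> + c * z \<tau>)) has_integral (exp (c * t) * z t - exp (c * 0) * z 0)) {0..t}"
    proof (rule fundamental_theorem_of_calculus)
      show "0 \<le> t" using t0 by simp
      fix x assume x: "x \<in> {0..t}"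
      have ed: "((\<lambda>\<tau>. exp (c * \<tau>)) has_real_derivative exp (c * x) * c) (at x within {0..t})"
        by (auto intro!: derivative_eq_intros)
      have "((\<lambda>\<tau>. exp (c * \<tau>) * z \<tau>) has_real_derivative (exp (c * x) * c) * z x + exp (c * x) * w x) (at x within {0..t})"
        using DERIV_mult[OF ed zd[OF x]] by (simp add: algebra_simps)
      then show "((\<lambda>\<tau>. exp (c * \<tau>) * z \<tau>) has_vector_derivative exp (c * x) * (w x + c * z x)) (at x within {0..t})"
        by (simp add: has_real_derivative_iff_has_vector_derivative[symmetric] algebra_simps)
    qed
    then show ?thesis by (simp add: E_def z_def)
  qed
  have h3: "((\<lambda>\<tau>. (w t + c * z t) * (c * exp (c * \<tau>)) - c * (exp (c * \<tau>) * (w \<tau> + c * z \<tau>)))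
     has_integral ((w t + c * z t) * (E - 1) - c * (E * z t))) {0..t}"
    by (intro has_integral_diff has_integral_mult_right h1 h2)
  have "0 \<le> (w t + c * z t) * (E - 1) - c * (E * z t)"
  proof (rule has_integral_nonneg[OF h3])
    fix \<tau> assume \<tau>: "\<tau> \<in> {0..t}"
    have "w t - w \<tau> \<ge> - c * (z t - z \<tau>)" using ineq[of \<tau> t] \<tau> tT comb[OF \<tau>] by auto
    then have "0 \<le> c * exp (c * \<tau>) * (w t - w \<tau> + c * (z t - z \<tau>))"
      using c by (intro mult_nonneg_nonneg) auto
    then show "0 \<le> (w t + c * z t) * (c * exp (c * \<tau>)) - c * (exp (c * \<tau>) * (w \<tau> + c * z \<tau>))"
      by (simp add: algebra_simps)
  qed
  then have A: "(E - 1) * w t \<ge> c * z t" by (simp add: algebra_simps)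
  have B: "w t - w 0 \<ge> - c * z t" using ineq[of 0 t] tT t0 by (simp add: z_def)
  have "w t \<ge> w 0 / E"
  proof (cases "c * z t \<le> w 0 * (E - 1) / E")
    case True
    then have "w 0 - c * z t \<ge> w 0 / E" using E1 by (simp add: field_simps)
    then show ?thesis using B by linarith
  next
    case False
    then have "c * z t / (E - 1) > w 0 / E" using E1 by (simp add: field_simps)
    moreover have "w t \<ge> c * z t / (E - 1)" using A E1 by (simp add: field_simps)
    ultimately show ?thesis by linarith
  qed
  then show ?thesis by (simp add: E_def exp_minus divide_inverse)
qed

lemma AE_slice:
  fixes P :: "real \<times> real \<Rightarrow> bool"
  assumes "AE z in (lborel :: (real \<times> real) measure). P z"
  shows "AE s in lborel. AE x in lborel. P (x, s)"
proof -
  from assms have "AE z in lborel \<Otimes>\<^sub>M lborel. P z" by (subst lborel_prod)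
  then obtain N where N: "N \<in> null_sets (lborel \<Otimes>\<^sub>M lborel)" "{z \<in> space (lborel \<Otimes>\<^sub>M lborel). \<not> P z} \<subseteq> N"
    unfolding eventually_ae_filter by blast
  have "AE z in lborel \<Otimes>\<^sub>M lborel. z \<notin> N" using N(1) by (rule AE_not_in)
  then have "AE x in lborel. AE s in lborel. (x, s) \<notin> N" by (rule lborel_pair.AE_pair)
  moreover have "{z \<in> space (lborel \<Otimes>\<^sub>M lborel). (fst z, snd z) \<notin> N} \<in> sets (lborel \<Otimes>\<^sub>M lborel)"
  proof -
    have "{z \<in> space (lborel \<Otimes>\<^sub>M lborel). (fst z, snd z) \<notin> N} = space (lborel \<Otimes>\<^sub>M lborel) - N" by auto
    then show ?thesis using N(1) by (metis null_setsD2 sets.compl_sets)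
  qed
  ultimately have "AE s in lborel. AE x in lborel. (x, s) \<notin> N"
    using lborel_pair.AE_commute[of "\<lambda>x s. (x, s) \<notin> N"] by simp
  then show ?thesis
    apply (rule eventually_mono)
    apply (erule eventually_mono)
    using N(2) by (auto simp: space_pair_measure)
qed

lemma null_times_line: "(UNIV \<times> {a, b} :: (real \<times> real) set) \<in> null_sets (lborel \<Otimes>\<^sub>M lborel)"
proof -
  have "emeasure (lborel \<Otimes>\<^sub>M lborel) (UNIV \<times> {a, b} :: (real \<times> real) set) = emeasure lborel (UNIV :: real set) * emeasure lborel {a, b}"
    by (rule lborel.emeasure_pair_measure_Times) auto
  also have "emeasure lborel {a, b::real} = 0"
    by (simp add: emeasure_lborel_countable)
  finally show ?thesis by (auto simp: null_sets_def)
qed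

lemma slice_meas:
  fixes g :: "real \<Rightarrow> real \<Rightarrow> real"
  assumes "(\<lambda>(x, t). g x t) \<in> borel_measurable (lborel :: (real \<times> real) measure)"
  shows "(\<lambda>x. g x s) \<in> borel_measurable lborel"
proof -
  have "(\<lambda>(x, t). g x t) \<in> borel_measurable (lborel \<Otimes>\<^sub>M lborel)"
    using assms by (subst lborel_prod)
  then have "(\<lambda>x. (\<lambda>(x, t). g x t) (x, s)) \<in> borel_measurable lborel"
    apply (rule measurable_compose[where f="\<lambda>x. (x,s)" and N="lborel \<Otimes>\<^sub>M lborel", rotated])
    by (rule measurable_Pair) auto
  then show ?thesis by simp
qed

lemma fubini_strip:
  fixes gt :: "real \<Rightarrow> real \<Rightarrow> real" and a :: "real \<Rightarrow> real"
  assumes meas: "(\<lambda>(x, t). gt x t) \<in> borel_measurable (lborel :: (real \<times> real) measure)"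
    and L2: "set_integrable (lborel :: (real \<times> real) measure) (UNIV \<times> {0<..<T}) (\<lambda>(x, t). (gt x t)\<^sup>2)"
    and ac: "continuous_on UNIV a" and aA: "\<And>x. \<bar>a x\<bar> \<le> A" and aR: "\<And>x. R < \<bar>x\<bar> \<Longrightarrow> a x = 0"
    and t: "0 \<le> t" "t \<le> T"
  shows "integrable lborel (\<lambda>x. a x * (LINT s:{0..t}|lborel. gt x s))"
    "set_integrable lborel {0..t} (\<lambda>s. \<integral>x. a x * gt x s \<partial>lborel)"
    "(\<integral>x. a x * (LINT s:{0..t}|lborel. gt x s) \<partial>lborel) = (LINT s:{0..t}|lborel. (\<integral>x. a x * gt x s \<partial>lborel))"
proof -
  define H where "H x s = indicator {0..t} s * (a x * gt x s)" for x s
  have measM: "(\<lambda>(x, t). gt x t) \<in> borel_measurable (lborel \<Otimes>\<^sub>M lborel)"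
    using meas by (subst lborel_prod)
  have L2M: "integrable (lborel \<Otimes>\<^sub>M lborel) (\<lambda>z. indicator (UNIV \<times> {0<..<T}) z * (case z of (x, t) \<Rightarrow> (gt x t)\<^sup>2))"
    using L2 unfolding set_integrable_def by (subst lborel_prod) simp
  have am: "a \<in> borel_measurable lborel" using ac by (simp add: borel_measurable_continuous_onI)
  have Hm: "(\<lambda>(x, s). H x s) \<in> borel_measurable (lborel \<Otimes>\<^sub>M lborel)"
  proof -
    have "(\<lambda>z. indicator {0..t} (snd z) * (a (fst z) * (\<lambda>(x, t). gt x t) z)) \<in> borel_measurable (lborel \<Otimes>\<^sub>M lborel)"
      using measM am by measurable
    then show ?thesis unfolding H_def by (simp add: case_prod_beta')
  qed
  have A0: "A \<ge> 0" using aA[of 0] by simp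
  define B where "B z = A * (indicator ({-R..R} \<times> {0<..<T}) z + indicator (UNIV \<times> {0<..<T}) z * (case z of (x, t) \<Rightarrow> (gt x t)\<^sup>2))" for z
  have Bi: "integrable (lborel \<Otimes>\<^sub>M lborel) B"
  proof -
    have "emeasure (lborel \<Otimes>\<^sub>M lborel) ({-R..R} \<times> {0<..<T}) = emeasure lborel {-R..R} * emeasure lborel {0<..<T::real}"
      by (rule lborel.emeasure_pair_measure_Times) auto
    also have "\<dots> < \<infinity>" using t by (simp add: ennreal_mult_less_top emeasure_lborel_Icc_eq)
    finally have "integrable (lborel \<Otimes>\<^sub>M lborel) (indicator ({-R..R} \<times> {0<..<T}) :: real \<times> real \<Rightarrow> real)"
      by (intro integrable_real_indicator) auto
    then show ?thesis unfolding B_def using L2M by (intro integrable_mult_right Bochner_Integration.integrable_add)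
  qed
  have ae: "AE z in lborel \<Otimes>\<^sub>M lborel. z \<notin> (UNIV \<times> {0, T} :: (real \<times> real) set)"
    by (rule AE_not_in[OF null_times_line])
  have Hi: "integrable (lborel \<Otimes>\<^sub>M lborel) (\<lambda>(x, s). H x s)"
  proof (rule Bochner_Integration.integrable_bound[OF Bi Hm])
    show "AE z in lborel \<Otimes>\<^sub>M lborel. norm ((\<lambda>(x, s). H x s) z) \<le> norm (B z)"
      using ae
    proof (rule eventually_mono)
      fix z :: "real \<times> real" assume z: "z \<notin> UNIV \<times> {0, T}"
      obtain x s where zxs: "z = (x, s)" by (cases z)
      have "\<bar>H x s\<bar> \<le> B (x, s)"
      proof (cases "s \<in> {0..t} \<and> x \<in> {-R..R}")
        case True
        then have s: "s \<in> {0<..<T}" using z t zxs by auto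
        have y: "\<bar>y\<bar> \<le> 1 + y\<^sup>2" for y :: real
        proof -
          have "0 \<le> (\<bar>y\<bar> - 1)\<^sup>2" by simp
          then have "2 * \<bar>y\<bar> \<le> 1 + y\<^sup>2" by (simp add: power2_diff power2_abs)
          moreover have "0 \<le> y\<^sup>2" by simp
          ultimately show ?thesis by linarith
        qed
        have "\<bar>H x s\<bar> = \<bar>a x\<bar> * \<bar>gt x s\<bar>" using True by (simp add: H_def abs_mult)
        also have "\<dots> \<le> A * (1 + (gt x s)\<^sup>2)"
          using aA[of x] y[of "gt x s"] A0 by (intro mult_mono) auto
        also have "\<dots> = B (x, s)" using True s by (simp add: B_def)
        finally show ?thesis .
      next
        case False
        then have "H x s = 0" using aR[of x] by (auto simp: H_def)
        moreover have "B (x, s) \<ge> 0" using A0 by (simp add: B_def)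
        ultimately show ?thesis by simp
      qed
      moreover have "B (x, s) \<ge> 0" using A0 by (simp add: B_def)
      ultimately show "norm ((\<lambda>(x, s). H x s) z) \<le> norm (B z)" using zxs by simp
    qed
  qed
  have eq1: "(\<integral>s. H x s \<partial>lborel) = a x * (LINT s:{0..t}|lborel. gt x s)" for x
    unfolding H_def set_lebesgue_integral_def by (simp add: mult_ac)
  have eq2: "(\<integral>x. H x s \<partial>lborel) = indicator {0..t} s * (\<integral>x. a x * gt x s \<partial>lborel)" for s
    unfolding H_def by simp
  show "integrable lborel (\<lambda>x. a x * (LINT s:{0..t}|lborel. gt x s))"
    using lborel_pair.integrable_fst[OF Hi] unfolding eq1 .
  show "set_integrable lborel {0..t} (\<lambda>s. \<integral>x. a x * gt x s \<partial>lborel)"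
    using lborel_pair.integrable_snd[OF Hi] unfolding eq2 set_integrable_def by simp
  show "(\<integral>x. a x * (LINT s:{0..t}|lborel. gt x s) \<partial>lborel) = (LINT s:{0..t}|lborel. (\<integral>x. a x * gt x s \<partial>lborel))"
    using lborel_pair.Fubini_integral[OF Hi] unfolding eq1 eq2 set_lebesgue_integral_def by simp
qed

lemma integrable_cont_mult:
  fixes a G :: "real \<Rightarrow> real"
  assumes G: "integrable lborel G" and a: "continuous_on UNIV a" and A: "\<And>x. \<bar>a x\<bar> \<le> A"
  shows "integrable lborel (\<lambda>x. a x * G x)"
proof (rule Bochner_Integration.integrable_bound[where f="\<lambda>x. A * \<bar>G x\<bar>"])
  show "integrable lborel (\<lambda>x. A * \<bar>G x\<bar>)" using G by auto
  show "(\<lambda>x. a x * G x) \<in> borel_measurable lborel"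
    using G a by (intro borel_measurable_times) (auto simp: borel_measurable_continuous_onI)
  show "AE x in lborel. norm (a x * G x) \<le> norm (A * \<bar>G x\<bar>)"
  proof (rule AE_I2)
    fix x
    have "\<bar>a x * G x\<bar> \<le> A * \<bar>G x\<bar>" using A[of x] by (simp add: abs_mult mult_right_mono)
    then show "norm (a x * G x) \<le> norm (A * \<bar>G x\<bar>)" by simp
  qed
qed

lemma key_space:
  fixes G Gx Gxx Gt q q1 q2 \<eta> :: "real \<Rightarrow> real"
  assumes wd1: "weak_deriv G Gx" and wd2: "weak_deriv Gx Gxx"
    and pde: "AE x in lborel. Gt x + c * q x * Gx x - d * q x * Gxx x = 0"
    and Gtm: "Gt \<in> borel_measurable lborel"
    and Gnn: "AE x in lborel. G x \<ge> 0" and Gint: "integrable lborel G"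
    and qd: "\<And>x. (q has_real_derivative q1 x) (at x)"
    and q1d: "\<And>x. (q1 has_real_derivative q2 x) (at x)"
    and q2c: "continuous_on UNIV q2"
    and qpos: "\<And>x. 0 < q x" and qle: "\<And>x. q x \<le> 1"
    and q1b: "\<And>x. \<bar>q1 x\<bar> \<le> cp * (1 - q x)" and q2b: "\<And>x. \<bar>q2 x\<bar> \<le> cp * (1 - q x)"
    and cp: "cp > 0"
    and eta: "smooth \<eta>" and supp: "\<And>x. R < \<bar>x\<bar> \<Longrightarrow> \<eta> x = 0" and R: "R > 0"
    and eta_nn: "\<And>x. \<eta> x \<ge> 0" and eta_b: "\<And>x. \<eta> x \<le> B0"
    and B1: "\<And>x. \<bar>deriv \<eta> x\<bar> \<le> B1" and B2: "\<And>x. \<bar>deriv (deriv \<eta>) x\<bar> \<le> B2"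
    and c0: "\<bar>c\<bar> * cp + d * (cp + 2 * cp\<^sup>2) \<le> c0" and d: "d \<ge> 0"
  shows "integrable lborel (\<lambda>x. \<eta> x * (1 - q x) * Gt x)"
    "(\<integral>x. \<eta> x * (1 - q x) * Gt x \<partial>lborel) \<ge>
      - c0 * (\<integral>x. \<eta> x * (1 - q x) * G x \<partial>lborel) - (\<bar>c\<bar> * B1 + d * B2 + 2 * d * B1 * cp) * (\<integral>x. G x \<partial>lborel)"
proof -
  define w where "w x = (1 - q x) * q x" for x
  define w1 where "w1 x = q1 x * (1 - 2 * q x)" for x
  define w2 where "w2 x = q2 x * (1 - 2 * q x) - 2 * (q1 x)\<^sup>2" for x
  define e1 where "e1 = deriv \<eta>"
  define e2 where "e2 = deriv (deriv \<eta>)"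
  have qc: "continuous_on UNIV q" using qd by (meson DERIV_isCont continuous_at_imp_continuous_on)
  have q1c: "continuous_on UNIV q1" using q1d by (meson DERIV_isCont continuous_at_imp_continuous_on)
  have wd: "(w has_real_derivative w1 x) (at x)" for x
    unfolding w_def w1_def using qd[of x] by (auto intro!: derivative_eq_intros simp: algebra_simps)
  have w1d: "(w1 has_real_derivative w2 x) (at x)" for x
    unfolding w1_def w2_def using qd[of x] q1d[of x]
    by (auto intro!: derivative_eq_intros simp: algebra_simps power2_eq_square)
  have wc: "continuous_on UNIV w" unfolding w_def by (auto intro!: continuous_intros qc)
  have w1c: "continuous_on UNIV w1" unfolding w1_def by (auto intro!: continuous_intros qc q1c)
  have w2c: "continuous_on UNIV w2" unfolding w2_def by (auto intro!: continuous_intros qc q1c q2c)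
  have eta1: "smooth e1" unfolding e1_def using smooth_deriv(2)[OF eta] .
  have e2eq: "deriv e1 = e2" unfolding e1_def e2_def ..
  have supp1: "e1 x = 0" if "R < \<bar>x\<bar>" for x unfolding e1_def using deriv_supp[OF eta supp that] .
  have ec: "continuous_on UNIV \<eta>" by (rule smooth_cont[OF eta])
  have e1c: "continuous_on UNIV e1" by (rule smooth_cont[OF eta1])
  have e2c: "continuous_on UNIV e2" unfolding e2eq[symmetric] by (rule smooth_cont[OF smooth_deriv(2)[OF eta1]])
  note A = weak_ext[OF wd1 eta supp R wd w1c, folded e1_def]
  note B = weak_ext[OF wd2 eta supp R wd w1c, folded e1_def]
  note C = weak_ext[OF wd1 eta1 supp1 R wd w1c, unfolded e2eq]
  note D = weak_ext[OF wd1 eta supp R w1d w2c, folded e1_def]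
  define I1 where "I1 = (\<integral>x. G x * (e1 x * w x + \<eta> x * w1 x) \<partial>lborel)"
  define I2 where "I2 = (\<integral>x. G x * (e2 x * w x + e1 x * w1 x) \<partial>lborel)"
  define I3 where "I3 = (\<integral>x. G x * (e1 x * w1 x + \<eta> x * w2 x) \<partial>lborel)"
  have lGx: "loc_int Gx" and lGxx: "loc_int Gxx" using wd2 unfolding weak_deriv_def by auto
  have psic: "continuous_on UNIV (\<lambda>x. \<eta> x * w x)" by (auto intro!: continuous_intros ec wc)
  have iGx: "integrable lborel (\<lambda>x. Gx x * (\<eta> x * w x))" using A(2) .
  have iGxx: "integrable lborel (\<lambda>x. Gxx x * (\<eta> x * w x))" using B(2) .
  have Ix: "(\<integral>x. Gx x * (\<eta> x * w x) \<partial>lborel) = - I1" using A(3) unfolding I1_def by simp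
  have Ixx: "(\<integral>x. Gxx x * (\<eta> x * w x) \<partial>lborel) = I2 + I3"
  proof -
    have "(\<integral>x. Gxx x * (\<eta> x * w x) \<partial>lborel) = - (\<integral>x. Gx x * (e1 x * w x + \<eta> x * w1 x) \<partial>lborel)"
      using B(3) by simp
    also have "(\<integral>x. Gx x * (e1 x * w x + \<eta> x * w1 x) \<partial>lborel) =
       (\<integral>x. Gx x * (e1 x * w x) + Gx x * (\<eta> x * w1 x) \<partial>lborel)"
      by (simp add: algebra_simps)
    also have "\<dots> = (\<integral>x. Gx x * (e1 x * w x) \<partial>lborel) + (\<integral>x. Gx x * (\<eta> x * w1 x) \<partial>lborel)"
      using C(2) D(2) by (rule Bochner_Integration.integral_add)
    also have "\<dots> = - I2 - I3" using C(3) D(3) unfolding I2_def I3_def by simp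
    finally show ?thesis by simp
  qed
  have ae_eq: "AE x in lborel. \<eta> x * (1 - q x) * Gt x = (- c) * (Gx x * (\<eta> x * w x)) + d * (Gxx x * (\<eta> x * w x))"
    using pde
  proof (rule eventually_mono)
    fix x assume "Gt x + c * q x * Gx x - d * q x * Gxx x = 0"
    then have h: "Gt x = - c * q x * Gx x + d * q x * Gxx x" by simp
    show "\<eta> x * (1 - q x) * Gt x = (- c) * (Gx x * (\<eta> x * w x)) + d * (Gxx x * (\<eta> x * w x))"
      unfolding h w_def by (simp add: algebra_simps)
  qed
  have irhs: "integrable lborel (\<lambda>x. (- c) * (Gx x * (\<eta> x * w x)) + d * (Gxx x * (\<eta> x * w x)))"
    using iGx iGxx by auto
  have lhsm: "(\<lambda>x. \<eta> x * (1 - q x) * Gt x) \<in> borel_measurable lborel"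
  proof -
    have "(\<lambda>x. \<eta> x * (1 - q x)) \<in> borel_measurable lborel"
      by (auto intro!: borel_measurable_continuous_onI continuous_intros ec qc)
    from borel_measurable_times[OF this Gtm] show ?thesis by simp
  qed
  show ilhs: "integrable lborel (\<lambda>x. \<eta> x * (1 - q x) * Gt x)"
    using irhs lhsm ae_eq by (subst integrable_cong_AE[OF lhsm _ ae_eq]) (auto intro: borel_measurable_integrable)
  have F_eq: "(\<integral>x. \<eta> x * (1 - q x) * Gt x \<partial>lborel) = c * I1 + d * (I2 + I3)"
  proof -
    have "(\<integral>x. \<eta> x * (1 - q x) * Gt x \<partial>lborel) = (\<integral>x. (- c) * (Gx x * (\<eta> x * w x)) + d * (Gxx x * (\<eta> x * w x)) \<partial>lborel)"
      by (rule integral_cong_AE[OF lhsm _ ae_eq]) (use irhs in auto)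
    also have "\<dots> = (- c) * (\<integral>x. Gx x * (\<eta> x * w x) \<partial>lborel) + d * (\<integral>x. Gxx x * (\<eta> x * w x) \<partial>lborel)"
      using iGx iGxx by simp
    finally show ?thesis unfolding Ix Ixx by simp
  qed
  define K where "K x = c * (e1 x * w x + \<eta> x * w1 x) + d * (e2 x * w x + e1 x * w1 x + (e1 x * w1 x + \<eta> x * w2 x))" for x
  have IK: "c * I1 + d * (I2 + I3) = (\<integral>x. G x * K x \<partial>lborel)"
  proof -
    have "(\<integral>x. G x * K x \<partial>lborel) = (\<integral>x. c * (G x * (e1 x * w x + \<eta> x * w1 x)) + d * (G x * (e2 x * w x + e1 x * w1 x) + G x * (e1 x * w1 x + \<eta> x * w2 x)) \<partial>lborel)"
      by (simp add: K_def algebra_simps)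
    also have "\<dots> = c * I1 + d * (I2 + I3)"
      unfolding I1_def I2_def I3_def using A(1) C(1) D(1) by simp
    finally show ?thesis by simp
  qed
  define Er where "Er = \<bar>c\<bar> * B1 + d * B2 + 2 * d * B1 * cp"
  have Kb: "K x \<ge> - c0 * (\<eta> x * (1 - q x)) - Er" for x
  proof -
    have q0: "0 \<le> 1 - q x" "1 - q x \<le> 1" using qpos[of x] qle[of x] by auto
    have a12: "\<bar>1 - 2 * q x\<bar> \<le> 1" using qpos[of x] qle[of x] by auto
    have wb: "\<bar>w x\<bar> \<le> 1"
    proof -
      have "0 \<le> w x" using q0 qpos[of x] unfolding w_def by simp
      moreover have "w x \<le> 1" using q0 qpos[of x] qle[of x] unfolding w_def by (intro mult_le_one) auto
      ultimately show ?thesis by simp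
    qed
    have w1b: "\<bar>w1 x\<bar> \<le> cp * (1 - q x)" unfolding w1_def abs_mult
      using mult_mono[OF q1b[of x] a12] q0 cp by simp
    have w1b': "\<bar>w1 x\<bar> \<le> cp"
    proof -
      have "cp * (1 - q x) \<le> cp * 1" using q0 cp by (intro mult_left_mono) auto
      then show ?thesis using w1b by linarith
    qed
    have "\<bar>w2 x\<bar> \<le> \<bar>q2 x\<bar> * \<bar>1 - 2 * q x\<bar> + 2 * (q1 x)\<^sup>2" unfolding w2_def
      using abs_triangle_ineq4[of "q2 x * (1 - 2 * q x)" "2 * (q1 x)\<^sup>2"] by (simp add: abs_mult)
    also have "\<dots> \<le> cp * (1 - q x) + 2 * (cp * (1 - q x))\<^sup>2"
    proof (intro add_mono mult_left_mono)
      show "\<bar>q2 x\<bar> * \<bar>1 - 2 * q x\<bar> \<le> cp * (1 - q x)" using mult_mono[OF q2b[of x] a12] q0 cp by simp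
      show "(q1 x)\<^sup>2 \<le> (cp * (1 - q x))\<^sup>2" using power_mono[OF q1b[of x] abs_ge_zero, of 2] by simp
    qed simp
    also have "\<dots> \<le> (cp + 2 * cp\<^sup>2) * (1 - q x)"
    proof -
      have "(1 - q x)\<^sup>2 \<le> 1 - q x" using q0 by (simp add: power2_eq_square mult_le_one mult_left_le)
      then have i: "cp\<^sup>2 * (1 - q x)\<^sup>2 \<le> cp\<^sup>2 * (1 - q x)" by (intro mult_left_mono) auto
      have e1: "(cp + 2 * cp\<^sup>2) * (1 - q x) = cp * (1 - q x) + 2 * (cp\<^sup>2 * (1 - q x))" by (simp add: algebra_simps)
      have e2: "(cp * (1 - q x))\<^sup>2 = cp\<^sup>2 * (1 - q x)\<^sup>2" by (simp add: power_mult_distrib)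
      show ?thesis unfolding e1 e2 using i by linarith
    qed
    finally have w2b: "\<bar>w2 x\<bar> \<le> (cp + 2 * cp\<^sup>2) * (1 - q x)" .
    have main: "c * (\<eta> x * w1 x) + d * (\<eta> x * w2 x) \<ge> - c0 * (\<eta> x * (1 - q x))"
    proof -
      have "\<bar>c * (\<eta> x * w1 x)\<bar> \<le> \<bar>c\<bar> * (\<eta> x * (cp * (1 - q x)))"
        using w1b eta_nn[of x] by (simp add: abs_mult mult_left_mono)
      moreover have "\<bar>d * (\<eta> x * w2 x)\<bar> \<le> d * (\<eta> x * ((cp + 2 * cp\<^sup>2) * (1 - q x)))"
        using w2b eta_nn[of x] d by (simp add: abs_mult mult_left_mono)
      moreover have "\<bar>c\<bar> * (\<eta> x * (cp * (1 - q x))) + d * (\<eta> x * ((cp + 2 * cp\<^sup>2) * (1 - q x)))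
          = (\<bar>c\<bar> * cp + d * (cp + 2 * cp\<^sup>2)) * (\<eta> x * (1 - q x))" by (simp add: algebra_simps)
      moreover have "(\<bar>c\<bar> * cp + d * (cp + 2 * cp\<^sup>2)) * (\<eta> x * (1 - q x)) \<le> c0 * (\<eta> x * (1 - q x))"
        using c0 eta_nn[of x] q0 by (intro mult_right_mono) auto
      ultimately show ?thesis using abs_ge_minus_self[of "c * (\<eta> x * w1 x)"] abs_ge_minus_self[of "d * (\<eta> x * w2 x)"] by linarith
    qed
    have err: "c * (e1 x * w x) + d * (e2 x * w x) + 2 * d * (e1 x * w1 x) \<ge> - Er"
    proof -
      have "\<bar>c * (e1 x * w x)\<bar> \<le> \<bar>c\<bar> * B1"
        using mult_mono[OF B1[of x] wb] B1[of x] by (simp add: abs_mult mult_left_mono e1_def)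
      moreover have "\<bar>d * (e2 x * w x)\<bar> \<le> d * B2"
        using mult_mono[OF B2[of x] wb] B2[of x] d by (simp add: abs_mult mult_left_mono e2_def)
      moreover have "\<bar>2 * d * (e1 x * w1 x)\<bar> \<le> 2 * d * (B1 * cp)"
        using mult_mono[OF B1[of x] w1b'] B1[of x] d by (simp add: abs_mult mult_left_mono e1_def)
      ultimately show ?thesis unfolding Er_def using abs_ge_minus_self[of "c * (e1 x * w x)"] abs_ge_minus_self[of "d * (e2 x * w x)"] abs_ge_minus_self[of "2 * d * (e1 x * w1 x)"] by linarith
    qed
    have "K x = (c * (\<eta> x * w1 x) + d * (\<eta> x * w2 x)) + (c * (e1 x * w x) + d * (e2 x * w x) + 2 * d * (e1 x * w1 x))"
      by (simp add: K_def algebra_simps)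
    then show ?thesis using main err by linarith
  qed
  have iGK: "integrable lborel (\<lambda>x. G x * K x)"
  proof -
    have e: "(\<lambda>x. G x * K x) = (\<lambda>x. c * (G x * (e1 x * w x + \<eta> x * w1 x)) + d * (G x * (e2 x * w x + e1 x * w1 x) + G x * (e1 x * w1 x + \<eta> x * w2 x)))"
      by (rule ext) (simp add: K_def algebra_simps)
    show ?thesis unfolding e
      by (intro Bochner_Integration.integrable_add integrable_mult_right A(1) C(1) D(1))
  qed
  have iGe: "integrable lborel (\<lambda>x. \<eta> x * (1 - q x) * G x)"
  proof (rule integrable_cont_mult[OF Gint])
    show "continuous_on UNIV (\<lambda>x. \<eta> x * (1 - q x))" by (auto intro!: continuous_intros ec qc)
    show "\<bar>\<eta> x * (1 - q x)\<bar> \<le> B0" for x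
    proof -
      have "\<eta> x * (1 - q x) \<le> \<eta> x * 1" using eta_nn[of x] qpos[of x] by (intro mult_left_mono) auto
      moreover have "0 \<le> \<eta> x * (1 - q x)" using eta_nn[of x] qle[of x] by simp
      ultimately show ?thesis using eta_b[of x] by simp
    qed
  qed
  have "(\<integral>x. G x * K x \<partial>lborel) \<ge> (\<integral>x. - c0 * (\<eta> x * (1 - q x) * G x) - Er * G x \<partial>lborel)"
  proof (rule integral_mono_AE)
    show "integrable lborel (\<lambda>x. - c0 * (\<eta> x * (1 - q x) * G x) - Er * G x)" using iGe Gint by auto
    show "integrable lborel (\<lambda>x. G x * K x)" by (rule iGK)
    show "AE x in lborel. - c0 * (\<eta> x * (1 - q x) * G x) - Er * G x \<le> G x * K x"
      using Gnn
    proof (rule eventually_mono)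
      fix x assume "G x \<ge> 0"
      then have "G x * (- c0 * (\<eta> x * (1 - q x)) - Er) \<le> G x * K x" using Kb[of x] by (simp add: mult_left_mono)
      then show "- c0 * (\<eta> x * (1 - q x) * G x) - Er * G x \<le> G x * K x" by (simp add: algebra_simps)
    qed
  qed
  also have "(\<integral>x. - c0 * (\<eta> x * (1 - q x) * G x) - Er * G x \<partial>lborel) =
      - c0 * (\<integral>x. \<eta> x * (1 - q x) * G x \<partial>lborel) - Er * (\<integral>x. G x \<partial>lborel)"
    using iGe Gint by simp
  finally show "(\<integral>x. \<eta> x * (1 - q x) * Gt x \<partial>lborel) \<ge>
      - c0 * (\<integral>x. \<eta> x * (1 - q x) * G x \<partial>lborel) - (\<bar>c\<bar> * B1 + d * B2 + 2 * d * B1 * cp) * (\<integral>x. G x \<partial>lborel)"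
    unfolding F_eq IK Er_def .
qed

lemma fixed_R:
  fixes q q1 q2 \<eta> ct dt g0 :: "real \<Rightarrow> real" and g gx gxx gt :: "real \<Rightarrow> real \<Rightarrow> real"
  assumes T: "T > 0" and c0: "c0 > 0"
    and qd: "\<And>x. (q has_real_derivative q1 x) (at x)"
    and q1d: "\<And>x. (q1 has_real_derivative q2 x) (at x)"
    and q2c: "continuous_on UNIV q2"
    and qpos: "\<And>x. 0 < q x" and qle: "\<And>x. q x \<le> 1"
    and q1b: "\<And>x. \<bar>q1 x\<bar> \<le> cp * (1 - q x)" and q2b: "\<And>x. \<bar>q2 x\<bar> \<le> cp * (1 - q x)"
    and cp: "cp > 0"
    and strong: "strong_solution T ct dt q g0 g gx gxx gt"
    and gnn: "\<And>t. t \<in> {0..T} \<Longrightarrow> AE x in lborel. g x t \<ge> 0"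
    and gint: "\<And>t. t \<in> {0..T} \<Longrightarrow> integrable lborel (\<lambda>x. g x t)"
    and gle: "\<And>t. t \<in> {0..T} \<Longrightarrow> (\<integral>x. g x t \<partial>lborel) \<le> 1"
    and g0int: "integrable lborel g0"
    and cbc: "\<And>t. t \<in> {0..T} \<Longrightarrow> \<bar>ct t\<bar> \<le> Kc"
    and cbd0: "\<And>t. t \<in> {0..T} \<Longrightarrow> 0 \<le> dt t"
    and cbd: "\<And>t. t \<in> {0..T} \<Longrightarrow> dt t \<le> Kd"
    and cb0: "\<And>t. t \<in> {0..T} \<Longrightarrow> \<bar>ct t\<bar> * cp + dt t * (cp + 2 * cp\<^sup>2) \<le> c0"
    and eta: "smooth \<eta>" and supp: "\<And>x. R < \<bar>x\<bar> \<Longrightarrow> \<eta> x = 0" and R: "R > 0"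
    and eta_nn: "\<And>x. \<eta> x \<ge> 0" and eta_b: "\<And>x. \<eta> x \<le> B0"
    and B1: "\<And>x. \<bar>deriv \<eta> x\<bar> \<le> B1" and B2: "\<And>x. \<bar>deriv (deriv \<eta>) x\<bar> \<le> B2"
    and t: "t \<in> {0..T}"
  shows "(\<integral>x. \<eta> x * (1 - q x) * g x t \<partial>lborel) \<ge>
     (\<integral>x. \<eta> x * (1 - q x) * g0 x \<partial>lborel) * exp (- c0 * t) - (Kc * B1 + Kd * B2 + 2 * Kd * B1 * cp) / c0"
proof -
  from strong have gm: "(\<lambda>(x, t). g x t) \<in> borel_measurable lborel"
    and gtm: "(\<lambda>(x, t). gt x t) \<in> borel_measurable lborel"
    and L2: "set_integrable lborel (UNIV \<times> {0<..<T}) (\<lambda>(x, t). (gt x t)\<^sup>2)"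
    and wdAE: "AE t in lborel. t \<in> {0<..<T} \<longrightarrow>
        weak_deriv (\<lambda>x. g x t) (\<lambda>x. gx x t) \<and> weak_deriv (\<lambda>x. gx x t) (\<lambda>x. gxx x t)"
    and rep: "\<forall>t\<in>{0..T}. AE x in lborel. g x t = g0 x + (LINT s:{0..t}|lborel. gt x s)"
    and pde: "AE z in lborel. z \<in> UNIV \<times> {0<..<T} \<longrightarrow>
        (case z of (x,t) \<Rightarrow> gt x t + ct t * q x * gx x t - dt t * q x * gxx x t = 0)"
    unfolding strong_solution_def L2_strip_def by auto
  have qc: "continuous_on UNIV q" using qd by (meson DERIV_isCont continuous_at_imp_continuous_on)
  have ec: "continuous_on UNIV \<eta>" by (rule smooth_cont[OF eta])
  define a where "a x = \<eta> x * (1 - q x)" for x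
  have ac: "continuous_on UNIV a" unfolding a_def by (auto intro!: continuous_intros ec qc)
  have ab: "\<bar>a x\<bar> \<le> B0" for x
  proof -
    have "\<eta> x * (1 - q x) \<le> \<eta> x * 1" using eta_nn[of x] qpos[of x] by (intro mult_left_mono) auto
    moreover have "0 \<le> \<eta> x * (1 - q x)" using eta_nn[of x] qle[of x] by simp
    ultimately show ?thesis using eta_b[of x] by (simp add: a_def)
  qed
  have aR: "a x = 0" if "R < \<bar>x\<bar>" for x using supp[OF that] by (simp add: a_def)
  define F where "F s = (\<integral>x. a x * gt x s \<partial>lborel)" for s
  define u where "u t = (\<integral>x. a x * g x t \<partial>lborel)" for t
  define u0 where "u0 = (\<integral>x. a x * g0 x \<partial>lborel)"
  define Er where "Er = Kc * B1 + Kd * B2 + 2 * Kd * B1 * cp"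
  have B10: "B1 \<ge> 0" using B1[of 0] by simp
  have B20: "B2 \<ge> 0" using B2[of 0] by simp
  have Kc0: "Kc \<ge> 0" using cbc[of 0] T by auto
  have Kd0: "Kd \<ge> 0" using cbd[of 0] cbd0[of 0] T by auto
  have Er0: "Er \<ge> 0" unfolding Er_def using B10 B20 Kc0 Kd0 cp by simp
  note fub = fubini_strip[where R=R and A=B0 and T=T, OF gtm L2 ac ab aR]
  have ga0: "integrable lborel (\<lambda>x. a x * g0 x)" by (rule integrable_cont_mult[OF g0int ac ab])
  have uid: "u t = u0 + (LINT s:{0..t}|lborel. F s)" if t: "t \<in> {0..T}" for t
  proof -
    have ae: "AE x in lborel. a x * g x t = a x * g0 x + a x * (LINT s:{0..t}|lborel. gt x s)"
    proof -
      have "AE x in lborel. g x t = g0 x + (LINT s:{0..t}|lborel. gt x s)" using rep t by blast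
      then show ?thesis by (rule eventually_mono) (simp add: algebra_simps)
    qed
    have i2: "integrable lborel (\<lambda>x. a x * (LINT s:{0..t}|lborel. gt x s))" using fub(1) t by auto
    have m1: "(\<lambda>x. a x * g x t) \<in> borel_measurable lborel"
      using slice_meas[OF gm, of t] ac by (intro borel_measurable_times) (auto simp: borel_measurable_continuous_onI)
    have "u t = (\<integral>x. a x * g0 x + a x * (LINT s:{0..t}|lborel. gt x s) \<partial>lborel)"
      unfolding u_def by (rule integral_cong_AE[OF m1 _ ae]) (use ga0 i2 in auto)
    also have "\<dots> = u0 + (\<integral>x. a x * (LINT s:{0..t}|lborel. gt x s) \<partial>lborel)"
      unfolding u0_def using ga0 i2 by (rule Bochner_Integration.integral_add)
    also have "(\<integral>x. a x * (LINT s:{0..t}|lborel. gt x s) \<partial>lborel) = (LINT s:{0..t}|lborel. F s)"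
      unfolding F_def using fub(3) t by auto
    finally show ?thesis .
  qed
  have FintT: "set_integrable lborel {0..T} F" unfolding F_def using fub(2)[of T] T by auto
  have Fsub: "set_integrable lborel {t1..t2} F" if "0 \<le> t1" "t2 \<le> T" for t1 t2
    by (rule set_integrable_subset[OF FintT]) (use that in auto)
  have Fhk: "F integrable_on {0..T}" using set_borel_integral_eq_integral(1)[OF FintT] .
  have uhk: "u t = u0 + integral {0..t} F" if "t \<in> {0..T}" for t
    using uid[OF that] set_borel_integral_eq_integral(2)[OF Fsub[of 0 t]] that by auto
  define w where "w t = u t + Er / c0" for t
  have wc: "continuous_on {0..T} w"
  proof -
    have "continuous_on {0..T} (\<lambda>t. u0 + integral {0..t} F + Er / c0)"
      by (intro continuous_intros indefinite_integral_continuous_1 Fhk)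
    then show ?thesis by (rule continuous_on_eq) (auto simp: w_def uhk)
  qed
  have AEpde: "AE s in lborel. AE x in lborel. (x, s) \<in> UNIV \<times> {0<..<T} \<longrightarrow>
        gt x s + ct s * q x * gx x s - dt s * q x * gxx x s = 0"
    using AE_slice[OF pde] by simp
  have key: "AE s in lborel. s \<in> {0<..<T} \<longrightarrow> F s \<ge> - c0 * u s - Er"
    using wdAE AEpde
  proof (eventually_elim)
    case (elim s)
    show ?case
    proof
      assume s: "s \<in> {0<..<T}"
      then have s': "s \<in> {0..T}" by auto
      from elim s have wd1: "weak_deriv (\<lambda>x. g x s) (\<lambda>x. gx x s)" and wd2: "weak_deriv (\<lambda>x. gx x s) (\<lambda>x. gxx x s)"
        by auto
      have pdes: "AE x in lborel. gt x s + ct s * q x * gx x s - dt s * q x * gxx x s = 0"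
        using elim(2) s by (auto elim!: eventually_mono)
      have c0s: "\<bar>ct s\<bar> * cp + dt s * (cp + 2 * cp\<^sup>2) \<le> c0" using cb0[OF s'] .
      note ks = key_space[OF wd1 wd2 pdes slice_meas[OF gtm] gnn[OF s'] gint[OF s'] qd q1d q2c qpos qle q1b q2b cp
          eta supp R eta_nn eta_b B1 B2 c0s cbd0[OF s']]
      have Gi0: "0 \<le> (\<integral>x. g x s \<partial>lborel)" using gnn[OF s'] by (rule integral_nonneg_AE)
      have coef: "\<bar>ct s\<bar> * B1 + dt s * B2 + 2 * dt s * B1 * cp \<le> Er"
        unfolding Er_def using cbc[OF s'] cbd[OF s'] cbd0[OF s'] B10 B20 cp
        by (intro add_mono mult_right_mono mult_left_mono) auto
      have coef0: "0 \<le> \<bar>ct s\<bar> * B1 + dt s * B2 + 2 * dt s * B1 * cp"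
        using cbd0[OF s'] B10 B20 cp by simp
      have "(\<bar>ct s\<bar> * B1 + dt s * B2 + 2 * dt s * B1 * cp) * (\<integral>x. g x s \<partial>lborel) \<le> Er * 1"
        using gle[OF s'] Gi0 coef coef0 Er0 by (intro mult_mono) auto
      then show "F s \<ge> - c0 * u s - Er"
        using ks(2) unfolding F_def u_def a_def by simp
    qed
  qed
  have ae0T: "AE s in lborel. s \<notin> {0, T}"
    by (rule AE_not_in) (auto intro: countable_imp_null_set_lborel)
  have ineq: "w t2 - w t1 \<ge> - c0 * integral {t1..t2} w" if tt: "0 \<le> t1" "t1 \<le> t2" "t2 \<le> T" for t1 t2
  proof -
    have wsub: "continuous_on {t1..t2} w" using wc tt by (auto intro: continuous_on_subset)
    have wsi: "set_integrable lborel {t1..t2} w" by (rule borel_integrable_atLeastAtMost'[OF wsub])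
    have F02: "F integrable_on {0..t2}" using set_borel_integral_eq_integral(1)[OF Fsub[of 0 t2]] tt by simp
    have "w t2 - w t1 = integral {0..t2} F - integral {0..t1} F"
      unfolding w_def using uhk[of t1] uhk[of t2] tt by auto
    also have "\<dots> = integral {t1..t2} F"
      using Henstock_Kurzweil_Integration.integral_combine[where a=0 and c=t1 and b=t2 and f=F] F02 tt by auto
    also have "\<dots> = (LINT s:{t1..t2}|lborel. F s)"
      using set_borel_integral_eq_integral(2)[OF Fsub[of t1 t2]] tt by simp
    also have "\<dots> \<ge> (LINT s:{t1..t2}|lborel. - c0 * w s)"
    proof (rule set_integral_mono_AE)
      show "set_integrable lborel {t1..t2} F" using Fsub tt by simp
      show "set_integrable lborel {t1..t2} (\<lambda>s. - c0 * w s)" using wsi by (rule set_integrable_mult_right)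
      show "AE s\<in>{t1..t2} in lborel. - c0 * w s \<le> F s"
        using key ae0T
      proof (eventually_elim)
        case (elim s)
        show ?case
        proof
          assume "s \<in> {t1..t2}"
          then have "s \<in> {0<..<T}" using elim(2) tt by auto
          then have "F s \<ge> - c0 * u s - Er" using elim(1) by simp
          then show "- c0 * w s \<le> F s" unfolding w_def using c0 by (simp add: algebra_simps)
        qed
      qed
    qed
    also have "(LINT s:{t1..t2}|lborel. - c0 * w s) = - c0 * integral {t1..t2} w"
      using set_borel_integral_eq_integral(2)[OF wsi] set_integral_mult_right[where a="- c0" and M=lborel and A="{t1..t2}" and f=w] by simp
    finally show ?thesis .
  qed
  have gw: "w t \<ge> w 0 * exp (- c0 * t)"
    by (rule gronwall_lower[OF c0 wc ineq t]) auto
  have "w 0 = u0 + Er / c0" unfolding w_def using uhk[of 0] T by simp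
  then have "u t \<ge> (u0 + Er / c0) * exp (- c0 * t) - Er / c0" using gw unfolding w_def by simp
  moreover have "(u0 + Er / c0) * exp (- c0 * t) \<ge> u0 * exp (- c0 * t)"
    using Er0 c0 by (simp add: distrib_right)
  ultimately have "u t \<ge> u0 * exp (- c0 * t) - Er / c0" by linarith
  then show ?thesis unfolding u_def u0_def a_def Er_def .
qed

lemma global_bound:
  fixes f :: "real \<Rightarrow> real"
  assumes "continuous_on UNIV f" "\<And>x. 1 < \<bar>x\<bar> \<Longrightarrow> f x = 0"
  shows "\<exists>B. B \<ge> 0 \<and> (\<forall>x. \<bar>f x\<bar> \<le> B)"
proof -
  obtain B where B: "\<forall>x\<in>{-1..1}. \<bar>f x\<bar> \<le> B" using cont_bounded_on[OF assms(1), of 1] by blast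
  have "\<bar>f x\<bar> \<le> max B 0" for x
  proof (cases "x \<in> {-1..1}")
    case True then have "\<bar>f x\<bar> \<le> B" using B by blast
    then show ?thesis by simp
  next
    case False then have "1 < \<bar>x\<bar>" by auto
    then show ?thesis using assms(2)[of x] by simp
  qed
  then show ?thesis by (intro exI[of _ "max B 0"]) auto
qed

definition cut :: "real \<Rightarrow> real \<Rightarrow> real" where
  "cut R x = inverse (bump 0) * bump (inverse R * x)"

lemma bump_supp: "1 < \<bar>x\<bar> \<Longrightarrow> bump x = 0" using bump_zero by simp

lemma cut_props:
  obtains H0 H1 H2 where "H0 \<ge> 0" "H1 \<ge> 0" "H2 \<ge> 0"
    "\<And>R. R \<ge> 1 \<Longrightarrow> smooth (cut R)"
    "\<And>R x. R \<ge> 1 \<Longrightarrow> R < \<bar>x\<bar> \<Longrightarrow> cut R x = 0"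
    "\<And>R x. cut R x \<ge> 0" "\<And>R x. cut R x \<le> H0"
    "\<And>R x. R \<ge> 1 \<Longrightarrow> \<bar>deriv (cut R) x\<bar> \<le> H1 / R"
    "\<And>R x. R \<ge> 1 \<Longrightarrow> \<bar>deriv (deriv (cut R)) x\<bar> \<le> H2 / R"
proof -
  define b0 where "b0 = bump 0"
  have b0: "b0 > 0" using bump_0 by (simp add: b0_def)
  have sb: "smooth bump" by (rule smooth_bump)
  have sb1: "smooth (deriv bump)" by (rule smooth_deriv(2)[OF sb])
  have sb2: "smooth (deriv (deriv bump))" by (rule smooth_deriv(2)[OF sb1])
  have supp1: "deriv bump x = 0" if "1 < \<bar>x\<bar>" for x by (rule deriv_supp[OF sb bump_supp that])
  have supp2: "deriv (deriv bump) x = 0" if "1 < \<bar>x\<bar>" for x by (rule deriv_supp[OF sb1 supp1 that])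
  obtain D0 where D0: "D0 \<ge> 0" "\<And>x. \<bar>bump x\<bar> \<le> D0" using global_bound[OF smooth_cont[OF sb] bump_supp] by blast
  obtain D1 where D1: "D1 \<ge> 0" "\<And>x. \<bar>deriv bump x\<bar> \<le> D1" using global_bound[OF smooth_cont[OF sb1] supp1] by blast
  obtain D2 where D2: "D2 \<ge> 0" "\<And>x. \<bar>deriv (deriv bump) x\<bar> \<le> D2" using global_bound[OF smooth_cont[OF sb2] supp2] by blast
  have dcut: "deriv (cut R) = (\<lambda>x. inverse b0 * (deriv bump (inverse R * x) * inverse R))" for R
  proof
    fix x
    have "((\<lambda>x. bump (inverse R * x)) has_real_derivative deriv bump (inverse R * x) * inverse R) (at x)"
      by (rule DERIV_chain2[OF smooth_deriv(1)[OF sb]]) (auto intro!: derivative_eq_intros)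
    then have "(cut R has_real_derivative inverse b0 * (deriv bump (inverse R * x) * inverse R)) (at x)"
      unfolding cut_def b0_def by (rule DERIV_cmult)
    then show "deriv (cut R) x = inverse b0 * (deriv bump (inverse R * x) * inverse R)" by (rule DERIV_imp_deriv)
  qed
  have ddcut: "deriv (deriv (cut R)) = (\<lambda>x. inverse b0 * (deriv (deriv bump) (inverse R * x) * inverse R * inverse R))" for R
  proof
    fix x
    have "((\<lambda>x. deriv bump (inverse R * x)) has_real_derivative deriv (deriv bump) (inverse R * x) * inverse R) (at x)"
      by (rule DERIV_chain2[OF smooth_deriv(1)[OF sb1]]) (auto intro!: derivative_eq_intros)
    then have "((\<lambda>x. deriv bump (inverse R * x) * inverse R) has_real_derivative deriv (deriv bump) (inverse R * x) * inverse R * inverse R) (at x)"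
      by (rule DERIV_cmult_right)
    then have "(deriv (cut R) has_real_derivative inverse b0 * (deriv (deriv bump) (inverse R * x) * inverse R * inverse R)) (at x)"
      unfolding dcut by (rule DERIV_cmult)
    then show "deriv (deriv (cut R)) x = inverse b0 * (deriv (deriv bump) (inverse R * x) * inverse R * inverse R)"
      by (rule DERIV_imp_deriv)
  qed
  show ?thesis
  proof (rule that[of "D0 / b0" "D1 / b0" "D2 / b0"])
    show "0 \<le> D0 / b0" "0 \<le> D1 / b0" "0 \<le> D2 / b0" using D0 D1 D2 b0 by auto
    show "smooth (cut R)" if "R \<ge> 1" for R
    proof -
      have "Ck k (\<lambda>x. inverse (bump 0) * bump (inverse R * x + 0))" for k
        using sb unfolding smooth_def by (intro Ck_cmult Ck_affine) auto
      then show ?thesis unfolding smooth_def cut_def by simp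
    qed
    show "cut R x = 0" if "R \<ge> 1" "R < \<bar>x\<bar>" for R x
    proof -
      have "1 < \<bar>inverse R * x\<bar>" using that by (simp add: abs_mult field_simps)
      then show ?thesis by (simp add: cut_def bump_supp)
    qed
    show "cut R x \<ge> 0" for R x using bump_nonneg bump_0 by (simp add: cut_def)
    show "cut R x \<le> D0 / b0" for R x
      using D0(2)[of "inverse R * x"] b0 bump_nonneg[of "inverse R * x"]
      by (simp add: cut_def b0_def field_simps)
    show "\<bar>deriv (cut R) x\<bar> \<le> D1 / b0 / R" if R: "R \<ge> 1" for R x
    proof -
      have "\<bar>deriv (cut R) x\<bar> = \<bar>deriv bump (inverse R * x)\<bar> / (b0 * R)"
        unfolding dcut using b0 R by (simp add: abs_mult field_simps)
      also have "\<dots> \<le> D1 / (b0 * R)" using D1(2) b0 R by (intro divide_right_mono) auto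
      finally show ?thesis by simp
    qed
    show "\<bar>deriv (deriv (cut R)) x\<bar> \<le> D2 / b0 / R" if R: "R \<ge> 1" for R x
    proof -
      have "\<bar>deriv (deriv (cut R)) x\<bar> = \<bar>deriv (deriv bump) (inverse R * x)\<bar> / (b0 * R * R)"
        unfolding ddcut using b0 R by (simp add: abs_mult field_simps)
      also have "\<dots> \<le> D2 / (b0 * R * R)" using D2(2) b0 R by (intro divide_right_mono) auto
      also have "\<dots> \<le> D2 / (b0 * R)" using D2 b0 R
      proof -
        have "b0 * R * 1 \<le> b0 * R * R" using b0 R by (intro mult_left_mono) auto
        moreover have "0 < b0 * R * R * (b0 * R)" using b0 R by simp
        ultimately show ?thesis using divide_left_mono[of "b0 * R" "b0 * R * R" D2] D2(1) by simp
      qed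
      finally show ?thesis by simp
    qed
  qed
qed

lemma cut_lim: "(\<lambda>n. cut (real n + 1) x) \<longlonglongrightarrow> 1"
proof -
  have "(\<lambda>n. inverse (real (Suc n)) * x) \<longlonglongrightarrow> 0 * x"
    by (intro tendsto_intros LIMSEQ_inverse_real_of_nat)
  then have l: "(\<lambda>n. inverse (real n + 1) * x) \<longlonglongrightarrow> 0" by (simp add: add.commute)
  have "isCont bump 0" using smooth_cont[OF smooth_bump] by (simp add: continuous_on_eq_continuous_at)
  then have "(\<lambda>n. bump (inverse (real n + 1) * x)) \<longlonglongrightarrow> bump 0"
    using l by (rule isCont_tendsto_compose)
  then have "(\<lambda>n. inverse (bump 0) * bump (inverse (real n + 1) * x)) \<longlonglongrightarrow> inverse (bump 0) * bump 0"
    by (intro tendsto_intros)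
  then show ?thesis using bump_0 by (simp add: cut_def)
qed

lemma dct_cut:
  fixes h q :: "real \<Rightarrow> real"
  assumes h: "integrable lborel h" and qc: "continuous_on UNIV q"
    and qpos: "\<And>x. 0 < q x" and qle: "\<And>x. q x \<le> 1"
    and H0: "\<And>R x. cut R x \<le> H0" and cnn: "\<And>R x. cut R x \<ge> 0"
    and sm: "\<And>R. R \<ge> 1 \<Longrightarrow> smooth (cut R)"
  shows "(\<lambda>n. \<integral>x. cut (real n + 1) x * (1 - q x) * h x \<partial>lborel) \<longlonglongrightarrow> (\<integral>x. (1 - q x) * h x \<partial>lborel)"
proof (rule integral_dominated_convergence[where w="\<lambda>x. H0 * \<bar>h x\<bar>"])
  have hm: "h \<in> borel_measurable lborel" using h by (rule borel_measurable_integrable)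
  show "(\<lambda>x. (1 - q x) * h x) \<in> borel_measurable lborel"
    using hm qc by (intro borel_measurable_times) (auto intro!: borel_measurable_continuous_onI continuous_intros)
  show "(\<lambda>x. cut (real n + 1) x * (1 - q x) * h x) \<in> borel_measurable lborel" for n
  proof -
    have "continuous_on UNIV (\<lambda>x. cut (real n + 1) x * (1 - q x))"
      using smooth_cont[OF sm[of "real n + 1"]] qc by (auto intro!: continuous_intros)
    then have "(\<lambda>x. cut (real n + 1) x * (1 - q x)) \<in> borel_measurable lborel"
      by (auto intro: borel_measurable_continuous_onI)
    from borel_measurable_times[OF this hm] show ?thesis by simp
  qed
  show "integrable lborel (\<lambda>x. H0 * \<bar>h x\<bar>)" using h by auto
  show "AE x in lborel. (\<lambda>n. cut (real n + 1) x * (1 - q x) * h x) \<longlonglongrightarrow> (1 - q x) * h x"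
  proof (rule AE_I2)
    fix x
    have "(\<lambda>n. cut (real n + 1) x * ((1 - q x) * h x)) \<longlonglongrightarrow> 1 * ((1 - q x) * h x)"
      by (intro tendsto_mult cut_lim tendsto_const)
    then show "(\<lambda>n. cut (real n + 1) x * (1 - q x) * h x) \<longlonglongrightarrow> (1 - q x) * h x" by (simp add: mult_ac)
  qed
  show "AE x in lborel. norm (cut (real n + 1) x * (1 - q x) * h x) \<le> H0 * \<bar>h x\<bar>" for n
  proof (rule AE_I2)
    fix x
    have "cut (real n + 1) x * (1 - q x) \<le> cut (real n + 1) x * 1"
      using cnn qpos[of x] by (intro mult_left_mono) auto
    moreover have "0 \<le> cut (real n + 1) x * (1 - q x)" using cnn qle[of x] by simp
    ultimately have "\<bar>cut (real n + 1) x * (1 - q x)\<bar> \<le> H0" using H0[of "real n + 1" x] by simp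
    then show "norm (cut (real n + 1) x * (1 - q x) * h x) \<le> H0 * \<bar>h x\<bar>"
      by (simp add: abs_mult mult_right_mono)
  qed
qed

lemma core:
  fixes q q1 q2 ct dt g0 :: "real \<Rightarrow> real" and g gx gxx gt :: "real \<Rightarrow> real \<Rightarrow> real"
  assumes T: "T > 0" and c0: "c0 > 0"
    and qd: "\<And>x. (q has_real_derivative q1 x) (at x)"
    and q1d: "\<And>x. (q1 has_real_derivative q2 x) (at x)"
    and q2c: "continuous_on UNIV q2"
    and qpos: "\<And>x. 0 < q x" and qle: "\<And>x. q x \<le> 1"
    and q1b: "\<And>x. \<bar>q1 x\<bar> \<le> cp * (1 - q x)" and q2b: "\<And>x. \<bar>q2 x\<bar> \<le> cp * (1 - q x)"
    and cp: "cp > 0"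
    and strong: "strong_solution T ct dt q g0 g gx gxx gt"
    and gnn: "\<And>t. t \<in> {0..T} \<Longrightarrow> AE x in lborel. g x t \<ge> 0"
    and gint: "\<And>t. t \<in> {0..T} \<Longrightarrow> integrable lborel (\<lambda>x. g x t)"
    and gle: "\<And>t. t \<in> {0..T} \<Longrightarrow> (\<integral>x. g x t \<partial>lborel) \<le> 1"
    and g0int: "integrable lborel g0"
    and cbc: "\<And>t. t \<in> {0..T} \<Longrightarrow> \<bar>ct t\<bar> \<le> Kc"
    and cbd0: "\<And>t. t \<in> {0..T} \<Longrightarrow> 0 \<le> dt t"
    and cbd: "\<And>t. t \<in> {0..T} \<Longrightarrow> dt t \<le> Kd"
    and cb0: "\<And>t. t \<in> {0..T} \<Longrightarrow> \<bar>ct t\<bar> * cp + dt t * (cp + 2 * cp\<^sup>2) \<le> c0"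
    and t: "t \<in> {0..T}"
  shows "(\<integral>x. (1 - q x) * g x t \<partial>lborel) \<ge> (\<integral>x. (1 - q x) * g0 x \<partial>lborel) * exp (- c0 * t)"
proof -
  obtain H0 H1 H2 where H: "H0 \<ge> 0" "H1 \<ge> 0" "H2 \<ge> 0"
    "\<And>R. R \<ge> 1 \<Longrightarrow> smooth (cut R)"
    "\<And>R x. R \<ge> 1 \<Longrightarrow> R < \<bar>x\<bar> \<Longrightarrow> cut R x = 0"
    "\<And>R x. cut R x \<ge> 0" "\<And>R x. cut R x \<le> H0"
    "\<And>R x. R \<ge> 1 \<Longrightarrow> \<bar>deriv (cut R) x\<bar> \<le> H1 / R"
    "\<And>R x. R \<ge> 1 \<Longrightarrow> \<bar>deriv (deriv (cut R)) x\<bar> \<le> H2 / R"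
    by (rule cut_props) blast
  have qc: "continuous_on UNIV q" using qd by (meson DERIV_isCont continuous_at_imp_continuous_on)
  define X where "X n = (\<integral>x. cut (real n + 1) x * (1 - q x) * g x t \<partial>lborel)" for n
  define Y0 where "Y0 n = (\<integral>x. cut (real n + 1) x * (1 - q x) * g0 x \<partial>lborel)" for n
  define C where "C = (Kc * H1 + Kd * H2 + 2 * Kd * H1 * cp) / c0"
  define Y where "Y n = Y0 n * exp (- c0 * t) - C * inverse (real n + 1)" for n
  have XY: "Y n \<le> X n" for n
  proof -
    define R where "R = real n + 1"
    have R1: "R \<ge> 1" "R > 0" by (auto simp: R_def)
    have "(\<integral>x. cut R x * (1 - q x) * g x t \<partial>lborel) \<ge>
      (\<integral>x. cut R x * (1 - q x) * g0 x \<partial>lborel) * exp (- c0 * t) - (Kc * (H1 / R) + Kd * (H2 / R) + 2 * Kd * (H1 / R) * cp) / c0"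
      by (rule fixed_R[OF T c0 qd q1d q2c qpos qle q1b q2b cp strong gnn gint gle g0int cbc cbd0 cbd cb0
            H(4)[OF R1(1)] H(5)[OF R1(1)] R1(2) H(6) H(7) H(8)[OF R1(1)] H(9)[OF R1(1)] t])
    moreover have "(Kc * (H1 / R) + Kd * (H2 / R) + 2 * Kd * (H1 / R) * cp) / c0 = C * inverse R"
    proof -
      have "Kc * (H1 / R) + Kd * (H2 / R) + 2 * Kd * (H1 / R) * cp = (Kc * H1 + Kd * H2 + 2 * Kd * H1 * cp) * inverse R"
        by (simp add: divide_inverse algebra_simps)
      then show ?thesis unfolding C_def by (simp add: divide_inverse mult_ac)
    qed
    ultimately show ?thesis unfolding X_def Y_def Y0_def R_def by simp
  qed
  have Xl: "X \<longlonglongrightarrow> (\<integral>x. (1 - q x) * g x t \<partial>lborel)"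
    unfolding X_def by (rule dct_cut[OF gint[OF t] qc qpos qle H(7) H(6) H(4)])
  have Y0l: "Y0 \<longlonglongrightarrow> (\<integral>x. (1 - q x) * g0 x \<partial>lborel)"
    unfolding Y0_def by (rule dct_cut[OF g0int qc qpos qle H(7) H(6) H(4)])
  have il: "(\<lambda>n. inverse (real n + 1)) \<longlonglongrightarrow> 0"
    using LIMSEQ_inverse_real_of_nat by (simp add: add.commute)
  have Yl: "Y \<longlonglongrightarrow> (\<integral>x. (1 - q x) * g0 x \<partial>lborel) * exp (- c0 * t) - C * 0"
    unfolding Y_def by (intro tendsto_intros Y0l il)
  show ?thesis
    using LIMSEQ_le[OF Yl Xl] XY by auto
qed

definition C0def :: "real \<Rightarrow> real \<Rightarrow> real \<Rightarrow> real" where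
  "C0def cp Sc Sd = cp * Sc + Sd * (cp + 2 * cp\<^sup>2) + 1"

lemma main:
  fixes M \<tau> \<kappa> T pmin \<epsilon> cp :: real and p g0 g0' ct dt dt' pe :: "real \<Rightarrow> real"
    and g gx gxx gt :: "real \<Rightarrow> real \<Rightarrow> real"
  assumes pe_def: "pe = (\<lambda>x. (p x + \<epsilon>) / (1 + \<epsilon>))"
  assumes M: "M > 1" and "\<tau> > 0" and "0 < \<kappa>" and "\<kappa> < 1" and T: "T > 0"
    and C2p: "C2 p" and monop: "mono p" and pmin: "pmin = (INF x. p x)" and pmin0: "0 \<le> pmin"
    and prange: "\<forall>x. pmin < p x \<and> p x \<le> 1"
    and eps: "\<epsilon> > 0" and cp: "cp > 0"
    and b1: "\<forall>x. \<bar>deriv pe x\<bar> \<le> cp * (1 - pe x)"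
    and b2: "\<forall>x. \<bar>deriv (deriv pe) x\<bar> \<le> cp * (1 - pe x)"
    and H1g0: "H1 g0 g0'" and g0nn: "AE x in lborel. g0 x \<ge> 0"
    and g0i: "integrable lborel (\<lambda>x. g0 x / pe x)" and g0m: "(\<integral>x. g0 x / pe x \<partial>lborel) = 1"
    and "integrable lborel (\<lambda>x. exp (4 * \<bar>x\<bar>) * (g0 x)\<^sup>2 / pe x)"
    and "integrable lborel (\<lambda>x. exp (4 * \<bar>x\<bar>) * (g0' x)\<^sup>2)"
    and "\<forall>t\<in>{0..T}. (dt has_real_derivative dt' t) (at t within {0..T})"
    and delta: "\<exists>\<delta>>0. \<forall>t\<in>{0..T}. dt t \<ge> \<delta>"
    and Kb: "\<exists>K. \<forall>t\<in>{0..T}. \<bar>ct t\<bar> + dt t + \<bar>dt' t\<bar> \<le> K"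
    and strong: "strong_solution T ct dt pe g0 g gx gxx gt"
    and gnn: "\<forall>t\<in>{0..T}. AE x in lborel. g x t \<ge> 0"
    and gmass: "\<forall>t\<in>{0..T}. integrable lborel (\<lambda>x. g x t / pe x) \<and> (\<integral>x. g x t / pe x \<partial>lborel) = 1"
  shows "let c0 = C0def cp (SUP t\<in>{0..T}. \<bar>ct t\<bar>) (SUP t\<in>{0..T}. dt t);
        \<alpha> = (\<lambda>t. \<integral>x. g x t \<partial>lborel);
        a = (\<lambda>t. \<kappa> - \<alpha> t);
        b = (\<lambda>t. \<alpha> t * (1 - \<alpha> t));
        d = (\<lambda>t. (M - 1)\<^sup>2 / 2 * ((a t)\<^sup>2 + b t / (M - 1)));
        \<beta>0 = (\<integral>x. (1 - pe x) * g0 x \<partial>lborel)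
    in \<forall>t\<in>{0<..T}. d t \<ge> (M - 1) * \<beta>0 / 2 * exp (- c0 * t)
                    \<and> (M - 1) * \<beta>0 / 2 * exp (- c0 * t) > 0"
proof -
  have pdiff: "\<And>x. p differentiable (at x)" and pddiff: "\<And>x. deriv p differentiable (at x)"
    and p2c: "continuous_on UNIV (deriv (deriv p))"
    using C2p unfolding C2_def by auto
  have hp: "(p has_real_derivative deriv p x) (at x)" for x
    using pdiff DERIV_deriv_iff_real_differentiable by blast
  have hp1: "(deriv p has_real_derivative deriv (deriv p) x) (at x)" for x
    using pddiff DERIV_deriv_iff_real_differentiable by blast
  have hq: "(pe has_real_derivative deriv p x / (1 + \<epsilon>)) (at x)" for x
    unfolding pe_def using hp[of x] eps by (auto intro!: derivative_eq_intros)
  have dq: "deriv pe = (\<lambda>x. deriv p x / (1 + \<epsilon>))" by (rule ext, rule DERIV_imp_deriv[OF hq])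
  have hq1: "(deriv pe has_real_derivative deriv (deriv p) x / (1 + \<epsilon>)) (at x)" for x
    unfolding dq using hp1[of x] eps by (auto intro!: derivative_eq_intros)
  have ddq: "deriv (deriv pe) = (\<lambda>x. deriv (deriv p) x / (1 + \<epsilon>))" by (rule ext, rule DERIV_imp_deriv[OF hq1])
  have qd: "(pe has_real_derivative deriv pe x) (at x)" for x using hq[of x] dq by simp
  have q1d: "(deriv pe has_real_derivative deriv (deriv pe) x) (at x)" for x using hq1[of x] ddq by simp
  have q2c: "continuous_on UNIV (deriv (deriv pe))" unfolding ddq by (intro continuous_intros p2c) (use eps in auto)
  have qc: "continuous_on UNIV pe" using qd by (meson DERIV_isCont continuous_at_imp_continuous_on)
  have ppos: "p x > 0" for x using prange[rule_format, of x] pmin0 by linarith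
  have qpos: "0 < pe x" for x using ppos[of x] eps by (simp add: pe_def)
  have qle: "pe x \<le> 1" for x using prange eps by (simp add: pe_def)
  have q1b: "\<bar>deriv pe x\<bar> \<le> cp * (1 - pe x)" for x using b1 by blast
  have q2b: "\<bar>deriv (deriv pe) x\<bar> \<le> cp * (1 - pe x)" for x using b2 by blast
  have qlt: "pe x < 1" for x
  proof (rule ccontr)
    assume "\<not> pe x < 1"
    then have px: "pe x = 1" using qle[of x] by simp
    have left: "pe y = 1" if "y \<le> x" for y
    proof -
      define f where "f z = exp (cp * z) * (1 - pe z)" for z
      have "f y \<le> f x"
      proof (rule DERIV_nonneg_imp_nondecreasing[OF that])
        fix z
        have "(f has_real_derivative exp (cp * z) * cp * (1 - pe z) + exp (cp * z) * (- deriv pe z)) (at z)"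
          unfolding f_def using qd[of z] by (auto intro!: derivative_eq_intros)
        moreover have "0 \<le> exp (cp * z) * cp * (1 - pe z) + exp (cp * z) * (- deriv pe z)"
        proof -
          have "deriv pe z \<le> cp * (1 - pe z)" using q1b[of z] by linarith
          then have "0 \<le> exp (cp * z) * (cp * (1 - pe z) - deriv pe z)" by simp
          then show ?thesis by (simp add: algebra_simps)
        qed
        ultimately show "\<exists>y. (f has_real_derivative y) (at z) \<and> 0 \<le> y" by blast
      qed
      then have "exp (cp * y) * (1 - pe y) \<le> 0" using px by (simp add: f_def)
      then have "1 - pe y \<le> 0" by (simp add: mult_le_0_iff)
      then show ?thesis using qle[of y] by simp
    qed
    have p1: "p y = 1" for y
    proof (cases "y \<le> x")
      case True then have "pe y = 1" by (rule left)
      then show ?thesis using eps by (simp add: pe_def field_simps)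
    next
      case False
      have "pe x = 1" by (rule px)
      then have "p x = 1" using eps by (simp add: pe_def field_simps)
      moreover have "p x \<le> p y" using False monop by (simp add: mono_def)
      ultimately show ?thesis using prange by (metis order.antisym)
    qed
    then have "pmin = 1" unfolding pmin by simp
    then show False using prange p1 by auto
  qed
  obtain \<delta> where \<delta>: "\<delta> > 0" "\<And>t. t \<in> {0..T} \<Longrightarrow> dt t \<ge> \<delta>" using delta by blast
  obtain K where K: "\<And>t. t \<in> {0..T} \<Longrightarrow> \<bar>ct t\<bar> + dt t + \<bar>dt' t\<bar> \<le> K" using Kb by blast
  define Sc where "Sc = (SUP t\<in>{0..T}. \<bar>ct t\<bar>)"
  define Sd where "Sd = (SUP t\<in>{0..T}. dt t)"
  define c0 where "c0 = C0def cp Sc Sd"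
  have bdc: "bdd_above ((\<lambda>t. \<bar>ct t\<bar>) ` {0..T})"
    by (rule bdd_aboveI2[where M=K]) (use K \<delta> in \<open>fastforce\<close>)
  have bdd: "bdd_above (dt ` {0..T})"
    by (rule bdd_aboveI2[where M=K]) (use K \<delta> in \<open>fastforce\<close>)
  have cSc: "\<bar>ct t\<bar> \<le> Sc" if "t \<in> {0..T}" for t unfolding Sc_def by (rule cSUP_upper[OF that bdc])
  have dSd: "dt t \<le> Sd" if "t \<in> {0..T}" for t unfolding Sd_def by (rule cSUP_upper[OF that bdd])
  have dnn: "0 \<le> dt t" if "t \<in> {0..T}" for t using \<delta>(2)[OF that] \<delta>(1) by simp
  have T0: "0 \<in> {0..T}" using T by simp
  have Sc0: "Sc \<ge> 0" using cSc[OF T0] by simp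
  have Sd0: "Sd \<ge> 0" using dSd[OF T0] dnn[OF T0] by simp
  have c0pos: "c0 > 0"
  proof -
    have "0 \<le> cp * Sc" using Sc0 cp by simp
    moreover have "0 \<le> Sd * (cp + 2 * cp\<^sup>2)" using Sd0 cp by simp
    ultimately show ?thesis unfolding c0_def C0def_def by linarith
  qed
  have cb0: "\<bar>ct t\<bar> * cp + dt t * (cp + 2 * cp\<^sup>2) \<le> c0" if t: "t \<in> {0..T}" for t
  proof -
    have "\<bar>ct t\<bar> * cp \<le> Sc * cp" using cSc[OF t] cp by (intro mult_right_mono) auto
    moreover have "dt t * (cp + 2 * cp\<^sup>2) \<le> Sd * (cp + 2 * cp\<^sup>2)" using dSd[OF t] cp by (intro mult_right_mono) auto
    ultimately show ?thesis unfolding c0_def C0def_def by (simp add: mult.commute)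
  qed
  have gmeas: "(\<lambda>(x, t). g x t) \<in> borel_measurable lborel"
    using strong unfolding strong_solution_def L2_strip_def by auto
  have gslice: "(\<lambda>x. g x t) \<in> borel_measurable lborel" for t by (rule slice_meas[OF gmeas])
  have gle_q: "AE x in lborel. norm (g x t) \<le> norm (g x t / pe x)" if t: "t \<in> {0..T}" for t
    using gnn t
  proof -
    have "AE x in lborel. g x t \<ge> 0" using gnn t by blast
    then show ?thesis
    proof (rule eventually_mono)
      fix x assume "g x t \<ge> 0"
      moreover have "g x t \<le> g x t / pe x" using \<open>g x t \<ge> 0\<close> qpos[of x] qle[of x]
        by (simp add: le_divide_eq mult_left_le)
      ultimately show "norm (g x t) \<le> norm (g x t / pe x)" using qpos[of x] by simp
    qed
  qed
  have gint: "integrable lborel (\<lambda>x. g x t)" if t: "t \<in> {0..T}" for t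
    using Bochner_Integration.integrable_bound[OF _ gslice gle_q[OF t]] gmass t by blast
  have gle1: "(\<integral>x. g x t \<partial>lborel) \<le> 1" if t: "t \<in> {0..T}" for t
  proof -
    have "(\<integral>x. g x t \<partial>lborel) \<le> (\<integral>x. g x t / pe x \<partial>lborel)"
    proof (rule integral_mono_AE[OF gint[OF t]])
      show "integrable lborel (\<lambda>x. g x t / pe x)" using gmass t by blast
      have "AE x in lborel. g x t \<ge> 0" using gnn t by blast
      then show "AE x in lborel. g x t \<le> g x t / pe x"
      proof (rule eventually_mono)
        fix x assume "g x t \<ge> 0"
        then show "g x t \<le> g x t / pe x" using qpos[of x] qle[of x] by (simp add: le_divide_eq mult_left_le)
      qed
    qed
    then show ?thesis using gmass t by simp
  qed
  have g0meas: "g0 \<in> borel_measurable lborel" using H1g0 unfolding H1_def L2_def by auto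
  have g0int: "integrable lborel g0"
  proof (rule Bochner_Integration.integrable_bound[OF g0i g0meas])
    show "AE x in lborel. norm (g0 x) \<le> norm (g0 x / pe x)"
      using g0nn
    proof (rule eventually_mono)
      fix x assume "g0 x \<ge> 0"
      moreover have "g0 x \<le> g0 x / pe x" using \<open>g0 x \<ge> 0\<close> qpos[of x] qle[of x]
        by (simp add: le_divide_eq mult_left_le)
      ultimately show "norm (g0 x) \<le> norm (g0 x / pe x)" using qpos[of x] by simp
    qed
  qed
  have decay: "(\<integral>x. (1 - pe x) * g x t \<partial>lborel) \<ge> (\<integral>x. (1 - pe x) * g0 x \<partial>lborel) * exp (- c0 * t)"
    if t: "t \<in> {0..T}" for t
    by (rule core[OF T c0pos qd q1d q2c qpos qle q1b q2b cp strong _ gint gle1 g0int cSc dnn dSd cb0 t])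
       (use gnn in auto)
  define \<beta>0 where "\<beta>0 = (\<integral>x. (1 - pe x) * g0 x \<partial>lborel)"
  have i1g0: "integrable lborel (\<lambda>x. (1 - pe x) * g0 x)"
    by (rule integrable_cont_mult[OF g0int, where A=1]) (use qpos qle in \<open>auto intro!: continuous_intros qc intro: less_imp_le simp: abs_le_iff\<close>)
  have beta0: "\<beta>0 > 0"
  proof -
    have nn: "AE x in lborel. 0 \<le> (1 - pe x) * g0 x" using g0nn by (auto elim!: eventually_mono simp: qle)
    have "\<beta>0 \<ge> 0" unfolding \<beta>0_def using nn by (rule integral_nonneg_AE)
    moreover have "\<beta>0 \<noteq> 0"
    proof
      assume "\<beta>0 = 0"
      then have "AE x in lborel. (1 - pe x) * g0 x = 0"
        using integral_nonneg_eq_0_iff_AE[OF i1g0 nn] unfolding \<beta>0_def by simp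
      then have ae0: "AE x in lborel. g0 x / pe x = 0"
        by (rule eventually_mono) (use qlt in \<open>auto simp: less_le\<close>)
      have "(\<integral>x. g0 x / pe x \<partial>lborel) = 0"
        using ae0 by (rule integral_eq_zero_AE)
      then show False using g0m by simp
    qed
    ultimately show ?thesis by simp
  qed
  have jensen: "(\<integral>x. (1 - pe x) * g x t \<partial>lborel) \<le> (\<integral>x. g x t \<partial>lborel) * (1 - (\<integral>x. g x t \<partial>lborel))"
    if t: "t \<in> {0..T}" for t
  proof -
    define \<alpha> where "\<alpha> = (\<integral>x. g x t \<partial>lborel)"
    have gi: "integrable lborel (\<lambda>x. g x t)" using gint[OF t] .
    have gqi: "integrable lborel (\<lambda>x. g x t / pe x)" using gmass t by blast
    have gq1: "(\<integral>x. g x t / pe x \<partial>lborel) = 1" using gmass t by blast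
    have pgi: "integrable lborel (\<lambda>x. pe x * g x t)"
      by (rule integrable_cont_mult[OF gi qc, where A=1]) (use qle in \<open>auto simp: abs_le_iff intro: order.trans[OF _ less_imp_le[OF qpos]]\<close>)
    have "0 \<le> (\<integral>x. g x t / pe x * (pe x - \<alpha>)\<^sup>2 \<partial>lborel)"
    proof (rule integral_nonneg_AE)
      have "AE x in lborel. g x t \<ge> 0" using gnn t by blast
      then show "AE x in lborel. 0 \<le> g x t / pe x * (pe x - \<alpha>)\<^sup>2"
      proof (rule eventually_mono)
        fix x assume "g x t \<ge> 0"
        then show "0 \<le> g x t / pe x * (pe x - \<alpha>)\<^sup>2" using qpos[of x] by simp
      qed
    qed
    also have "(\<integral>x. g x t / pe x * (pe x - \<alpha>)\<^sup>2 \<partial>lborel) = (\<integral>x. pe x * g x t - 2 * \<alpha> * g x t + \<alpha>\<^sup>2 * (g x t / pe x) \<partial>lborel)"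
    proof (rule Bochner_Integration.integral_cong[OF refl])
      fix x
      show "g x t / pe x * (pe x - \<alpha>)\<^sup>2 = pe x * g x t - 2 * \<alpha> * g x t + \<alpha>\<^sup>2 * (g x t / pe x)"
        using qpos[of x] by (simp add: power2_eq_square field_simps)
    qed
    also have "\<dots> = (\<integral>x. pe x * g x t \<partial>lborel) - 2 * \<alpha> * \<alpha> + \<alpha>\<^sup>2 * 1"
    proof -
      have iB: "integrable lborel (\<lambda>x. 2 * \<alpha> * g x t)" using gi by simp
      have iC: "integrable lborel (\<lambda>x. \<alpha>\<^sup>2 * (g x t / pe x))" using integrable_mult_right[OF gqi, of "\<alpha>\<^sup>2"] .
      have iAB: "integrable lborel (\<lambda>x. pe x * g x t - 2 * \<alpha> * g x t)" using pgi iB by simp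
      have "(\<integral>x. pe x * g x t - 2 * \<alpha> * g x t + \<alpha>\<^sup>2 * (g x t / pe x) \<partial>lborel)
          = (\<integral>x. pe x * g x t - 2 * \<alpha> * g x t \<partial>lborel) + (\<integral>x. \<alpha>\<^sup>2 * (g x t / pe x) \<partial>lborel)"
        by (rule Bochner_Integration.integral_add[OF iAB iC])
      also have "(\<integral>x. pe x * g x t - 2 * \<alpha> * g x t \<partial>lborel) = (\<integral>x. pe x * g x t \<partial>lborel) - (\<integral>x. 2 * \<alpha> * g x t \<partial>lborel)"
        by (rule Bochner_Integration.integral_diff[OF pgi iB])
      also have "(\<integral>x. 2 * \<alpha> * g x t \<partial>lborel) = 2 * \<alpha> * \<alpha>" unfolding \<alpha>_def by simp
      also have "(\<integral>x. \<alpha>\<^sup>2 * (g x t / pe x) \<partial>lborel) = \<alpha>\<^sup>2 * 1"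
        using integral_mult_right_zero[where c="\<alpha>\<^sup>2" and M=lborel and f="\<lambda>x. g x t / pe x"] gq1 by simp
      finally show ?thesis .
    qed
    finally have A: "\<alpha>\<^sup>2 \<le> (\<integral>x. pe x * g x t \<partial>lborel)" by (simp add: power2_eq_square)
    have "(\<integral>x. (1 - pe x) * g x t \<partial>lborel) = (\<integral>x. g x t - pe x * g x t \<partial>lborel)"
      by (simp add: algebra_simps)
    also have "\<dots> = \<alpha> - (\<integral>x. pe x * g x t \<partial>lborel)" using gi pgi unfolding \<alpha>_def by simp
    finally show ?thesis using A unfolding \<alpha>_def[symmetric] by (simp add: power2_eq_square algebra_simps)
  qed
  have fin: "(M - 1)\<^sup>2 / 2 * ((\<kappa> - (\<integral>x. g x t \<partial>lborel))\<^sup>2 + (\<integral>x. g x t \<partial>lborel) * (1 - (\<integral>x. g x t \<partial>lborel)) / (M - 1))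
      \<ge> (M - 1) * \<beta>0 / 2 * exp (- c0 * t) \<and> (M - 1) * \<beta>0 / 2 * exp (- c0 * t) > 0"
    if t: "t \<in> {0<..T}" for t
  proof
    have t': "t \<in> {0..T}" using t by auto
    define \<alpha> where "\<alpha> = (\<integral>x. g x t \<partial>lborel)"
    have "\<beta>0 * exp (- c0 * t) \<le> \<alpha> * (1 - \<alpha>)"
      using decay[OF t'] jensen[OF t'] unfolding \<beta>0_def \<alpha>_def by linarith
    then have "(M - 1) * \<beta>0 / 2 * exp (- c0 * t) \<le> (M - 1) / 2 * (\<alpha> * (1 - \<alpha>))"
      using M by (simp add: mult_left_mono)
    also have "\<dots> \<le> (M - 1)\<^sup>2 / 2 * ((\<kappa> - \<alpha>)\<^sup>2 + \<alpha> * (1 - \<alpha>) / (M - 1))"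
    proof -
      have "(M - 1)\<^sup>2 / 2 * ((\<kappa> - \<alpha>)\<^sup>2 + \<alpha> * (1 - \<alpha>) / (M - 1)) = (M - 1)\<^sup>2 / 2 * (\<kappa> - \<alpha>)\<^sup>2 + (M - 1) / 2 * (\<alpha> * (1 - \<alpha>))"
        using M by (simp add: power2_eq_square field_simps)
      moreover have "0 \<le> (M - 1)\<^sup>2 / 2 * (\<kappa> - \<alpha>)\<^sup>2" by simp
      ultimately show ?thesis by linarith
    qed
    finally show "(M - 1)\<^sup>2 / 2 * ((\<kappa> - (\<integral>x. g x t \<partial>lborel))\<^sup>2 + (\<integral>x. g x t \<partial>lborel) * (1 - (\<integral>x. g x t \<partial>lborel)) / (M - 1))
      \<ge> (M - 1) * \<beta>0 / 2 * exp (- c0 * t)" unfolding \<alpha>_def .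
    show "(M - 1) * \<beta>0 / 2 * exp (- c0 * t) > 0" using M beta0 by simp
  qed
  show ?thesis unfolding Let_def
    using fin unfolding c0_def Sc_def Sd_def \<beta>0_def by simp
qed

theorem corollary4p7:
  "\<exists>C0 :: real \<Rightarrow> real \<Rightarrow> real \<Rightarrow> real.
   \<forall>(M::real) (\<tau>::real) (\<kappa>::real) (T::real) (p::real \<Rightarrow> real) (pmin::real) (\<epsilon>::real)
     (cp::real) (g0::real \<Rightarrow> real) (g0'::real \<Rightarrow> real) (ct::real \<Rightarrow> real) (dt::real \<Rightarrow> real)
     (dt'::real \<Rightarrow> real) (g::real \<Rightarrow> real \<Rightarrow> real) (gx::real \<Rightarrow> real \<Rightarrow> real)
     (gxx::real \<Rightarrow> real \<Rightarrow> real) (gt::real \<Rightarrow> real \<Rightarrow> real).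
   let pe = (\<lambda>x. (p x + \<epsilon>) / (1 + \<epsilon>)) in
   M > 1 \<longrightarrow> \<tau> > 0 \<longrightarrow> 0 < \<kappa> \<longrightarrow> \<kappa> < 1 \<longrightarrow> T > 0 \<longrightarrow>
   C2 p \<longrightarrow> mono p \<longrightarrow> pmin = (INF x. p x) \<longrightarrow> 0 \<le> pmin \<longrightarrow>
   (\<forall>x. pmin < p x \<and> p x \<le> 1) \<longrightarrow>
   \<epsilon> > 0 \<longrightarrow> cp > 0 \<longrightarrow>
   (\<forall>x. \<bar>deriv pe x\<bar> \<le> cp * (1 - pe x)) \<longrightarrow>
   (\<forall>x. \<bar>deriv (deriv pe) x\<bar> \<le> cp * (1 - pe x)) \<longrightarrow>
   H1 g0 g0' \<longrightarrow> (AE x in lborel. g0 x \<ge> 0) \<longrightarrow>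
   integrable lborel (\<lambda>x. g0 x / pe x) \<longrightarrow> (\<integral>x. g0 x / pe x \<partial>lborel) = 1 \<longrightarrow>
   integrable lborel (\<lambda>x. exp (4 * \<bar>x\<bar>) * (g0 x)\<^sup>2 / pe x) \<longrightarrow>
   integrable lborel (\<lambda>x. exp (4 * \<bar>x\<bar>) * (g0' x)\<^sup>2) \<longrightarrow>
   (\<forall>t\<in>{0..T}. (dt has_real_derivative dt' t) (at t within {0..T})) \<longrightarrow>
   (\<exists>\<delta>>0. \<forall>t\<in>{0..T}. dt t \<ge> \<delta>) \<longrightarrow>
   (\<exists>K. \<forall>t\<in>{0..T}. \<bar>ct t\<bar> + dt t + \<bar>dt' t\<bar> \<le> K) \<longrightarrow>
   strong_solution T ct dt pe g0 g gx gxx gt \<longrightarrow>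
   (\<forall>t\<in>{0..T}. AE x in lborel. g x t \<ge> 0) \<longrightarrow>
   (\<forall>t\<in>{0..T}. integrable lborel (\<lambda>x. g x t / pe x) \<and> (\<integral>x. g x t / pe x \<partial>lborel) = 1) \<longrightarrow>
   (let c0 = C0 cp (SUP t\<in>{0..T}. \<bar>ct t\<bar>) (SUP t\<in>{0..T}. dt t);
        \<alpha> = (\<lambda>t. \<integral>x. g x t \<partial>lborel);
        a = (\<lambda>t. \<kappa> - \<alpha> t);
        b = (\<lambda>t. \<alpha> t * (1 - \<alpha> t));
        d = (\<lambda>t. (M - 1)\<^sup>2 / 2 * ((a t)\<^sup>2 + b t / (M - 1)));
        \<beta>0 = (\<integral>x. (1 - pe x) * g0 x \<partial>lborel)
    in \<forall>t\<in>{0<..T}. d t \<ge> (M - 1) * \<beta>0 / 2 * exp (- c0 * t)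
                    \<and> (M - 1) * \<beta>0 / 2 * exp (- c0 * t) > 0)"
  apply (rule exI[of _ C0def])
  apply (intro allI)
  subgoal for M \<tau> \<kappa> T p pmin \<epsilon> cp g0 g0' ct dt dt' g gx gxx gt
    apply (simp only: Let_def[where s="\<lambda>x. (p x + \<epsilon>) / (1 + \<epsilon>)"])
    apply (intro impI)
    apply (rule main[OF refl])
                        apply assumption+
    done
  done

end
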